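(* Let $\mathcal T$ be the biregular tree with parameters $\delta_B,\delta_R\ge1$, and let $\mathcal L$ be the self-adjoint operator on $L^2(\mathcal T)$ described in the context. Let $\lambda\in\mathbb C$ and suppose that the matrix $T_0(\lambda)$ (defined in the context) has an eigenvalue $\mu^\pm(\lambda)$ with $|\mu^\pm(\lambda)|=1/\sqrt{\delta_B\delta_R}$. Then $\lambda$ is in the spectrum of $\mathcal L$, and so $\lambda$ is real.
   Context: $\mathcal T$ is the infinite tree whose vertices are partitioned into classes $\mathcal V_B,\mathcal V_R$ with every edge joining a vertex of $\mathcal V_R$ to one of $\mathcal V_B$, every vertex of $\mathcal V_B$ having degree $\delta_B+1$ and every vertex of $\mathcal V_R$ degree $\delta_R+1$. Each edge is identified with $[0,1]$, $L^2(\mathcal T)=\bigoplus_e L^2(e)$, and $\mathcal L$ acts by $-d^2/dx^2$ on each edge with domain the $f\in L^2(\mathcal T)$ continuous on $\mathcal T$, $C^1$ on each edge with $f_e'$ absolutely continuous, $f''\in L^2(\mathcal T)$, and $\sum_{e\sim v}\partial_\nu f_e(v)=0$ at each vertex $v$ (outward derivatives). With $\omega=\sqrt\lambda$, $c=\cos\omega$, $c'=-\omega\sin\omega$, $s=\sin\omega/\omega$, $s'=\cos\omega$ (entire functions of $\lambda$), put $M_0=\begin{pmatrix}c&s\\c'&s'\end{pmatrix}$, $J_B=\operatorname{diag}(1,1/\delta_B)$, $J_R=\operatorname{diag}(1,1/\delta_R)$ and $T_0(\lambda)=J_RM_0J_BM_0$; its eigenvalues are $\mu^\pm(\lambda)=\frac12\operatorname{tr}T_0\pm\sqrt{\frac14(\operatorname{tr}T_0)^2-\det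 T_0}$, with $\det T_0=1/(\delta_B\delta_R)$. *)

theory Defs
  imports "HOL-Analysis.Analysis"
begin

text \<open>Vertices have type 'v, edges type 'e. Every edge e joins src e (in VB) to tgt e (in VR);
  the edge is identified with [0,1] with x = 0 at src e and x = 1 at tgt e.\<close>

definition tree_adj :: "('e \<Rightarrow> 'v) \<Rightarrow> ('e \<Rightarrow> 'v) \<Rightarrow> 'v \<Rightarrow> 'v \<Rightarrow> bool" where
  "tree_adj src tgt u v \<longleftrightarrow> (\<exists>e. (src e = u \<and> tgt e = v) \<or> (src e = v \<and> tgt e = u))"

definition biregular_tree ::
  "('e \<Rightarrow> 'v) \<Rightarrow> ('e \<Rightarrow> 'v) \<Rightarrow> 'v set \<Rightarrow> 'v set \<Rightarrow> nat \<Rightarrow> nat \<Rightarrow> bool" where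
  "biregular_tree src tgt VB VR dB dR \<longleftrightarrow>
     VB \<inter> VR = {} \<and> VB \<union> VR = UNIV \<and>
     (\<forall>e. src e \<in> VB \<and> tgt e \<in> VR) \<and>
     inj (\<lambda>e. (src e, tgt e)) \<and>
     (\<forall>v\<in>VB. finite {e. src e = v} \<and> card {e. src e = v} = dB + 1) \<and>
     (\<forall>v\<in>VR. finite {e. tgt e = v} \<and> card {e. tgt e = v} = dR + 1) \<and>
     (\<forall>u v. (tree_adj src tgt)\<^sup>*\<^sup>* u v) \<and>
     \<not> (\<exists>vs. length vs \<ge> 3 \<and> distinct vs \<and>
            (\<forall>i < length vs. tree_adj src tgt (vs ! i) (vs ! ((i + 1) mod length vs))))"

text \<open>A function on the metric tree is f :: 'e => real => complex, f e restricted to [0,1].\<close>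

definition edge_norm2 :: "(real \<Rightarrow> complex) \<Rightarrow> real" where
  "edge_norm2 g = (LINT x:{0..1}|lborel. (cmod (g x))\<^sup>2)"

definition in_L2 :: "('e \<Rightarrow> real \<Rightarrow> complex) \<Rightarrow> bool" where
  "in_L2 f \<longleftrightarrow>
     (\<forall>e. set_borel_measurable lborel {0..1} (f e) \<and>
          set_integrable lborel {0..1} (\<lambda>x. (cmod (f e x))\<^sup>2)) \<and>
     (\<lambda>e. edge_norm2 (f e)) summable_on UNIV"

definition L2_norm :: "('e \<Rightarrow> real \<Rightarrow> complex) \<Rightarrow> real" where
  "L2_norm f = sqrt (infsum (\<lambda>e. edge_norm2 (f e)) UNIV)"

definition abs_cont_01 :: "(real \<Rightarrow> complex) \<Rightarrow> bool" where
  "abs_cont_01 g \<longleftrightarrow>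
     (\<forall>\<epsilon>>0. \<exists>\<delta>>0. \<forall>(n::nat) (a::nat \<Rightarrow> real) b.
        (\<forall>i<n. 0 \<le> a i \<and> a i \<le> b i \<and> b i \<le> 1) \<and>
        (\<forall>i<n. \<forall>j<n. i \<noteq> j \<longrightarrow> b i \<le> a j \<or> b j \<le> a i) \<and>
        (\<Sum>i<n. b i - a i) < \<delta> \<longrightarrow>
        (\<Sum>i<n. cmod (g (b i) - g (a i))) < \<epsilon>)"

text \<open>qg_op src tgt VB VR f h: f is in the domain of L and L f = h (as elements of L^2).
  d e is the derivative of f e (C^1 on [0,1]), dd e is the a.e. derivative of d e.\<close>

definition qg_op ::
  "('e \<Rightarrow> 'v) \<Rightarrow> ('e \<Rightarrow> 'v) \<Rightarrow> 'v set \<Rightarrow> 'v set \<Rightarrow>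
   ('e \<Rightarrow> real \<Rightarrow> complex) \<Rightarrow> ('e \<Rightarrow> real \<Rightarrow> complex) \<Rightarrow> bool" where
  "qg_op src tgt VB VR f h \<longleftrightarrow> in_L2 f \<and> in_L2 h \<and>
     (\<exists>d dd.
        (\<forall>e. \<forall>x\<in>{0..1}. (f e has_vector_derivative d e x) (at x within {0..1})) \<and>
        (\<forall>e. continuous_on {0..1} (d e)) \<and>
        (\<forall>e. abs_cont_01 (d e)) \<and>
        (\<forall>e. AE x in lborel. x \<in> {0..1} \<longrightarrow>
               (d e has_vector_derivative dd e x) (at x within {0..1})) \<and>
        in_L2 dd \<and>
        (\<forall>e. AE x in lborel. x \<in> {0..1} \<longrightarrow> h e x = - dd e x) \<and>
        (\<forall>v\<in>VB. \<forall>e1 e2. src e1 = v \<longrightarrow> src e2 = v \<longrightarrow> f e1 0 = f e2 0) \<and>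
        (\<forall>v\<in>VR. \<forall>e1 e2. tgt e1 = v \<longrightarrow> tgt e2 = v \<longrightarrow> f e1 1 = f e2 1) \<and>
        (\<forall>v\<in>VB. (\<Sum>e\<in>{e. src e = v}. - d e 0) = 0) \<and>
        (\<forall>v\<in>VR. (\<Sum>e\<in>{e. tgt e = v}. d e 1) = 0))"

definition qg_resolvent_set ::
  "('e \<Rightarrow> 'v) \<Rightarrow> ('e \<Rightarrow> 'v) \<Rightarrow> 'v set \<Rightarrow> 'v set \<Rightarrow> complex set" where
  "qg_resolvent_set src tgt VB VR = {lam. \<exists>C::real.
     (\<forall>g. in_L2 g \<longrightarrow> (\<exists>f h. qg_op src tgt VB VR f h \<and>
          (\<forall>e. AE x in lborel. x \<in> {0..1} \<longrightarrow> h e x - lam * f e x = g e x) \<and>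
          L2_norm f \<le> C * L2_norm g)) \<and>
     (\<forall>f h. qg_op src tgt VB VR f h \<and>
          (\<forall>e. AE x in lborel. x \<in> {0..1} \<longrightarrow> h e x - lam * f e x = 0) \<longrightarrow>
          L2_norm f = 0)}"

definition qg_spectrum ::
  "('e \<Rightarrow> 'v) \<Rightarrow> ('e \<Rightarrow> 'v) \<Rightarrow> 'v set \<Rightarrow> 'v set \<Rightarrow> complex set" where
  "qg_spectrum src tgt VB VR = UNIV - qg_resolvent_set src tgt VB VR"

definition om :: "complex \<Rightarrow> complex" where "om lam = csqrt lam"
definition cc :: "complex \<Rightarrow> complex" where "cc lam = cos (om lam)"
definition cc' :: "complex \<Rightarrow> complex" where "cc' lam = - om lam * sin (om lam)"
definition ss :: "complex \<Rightarrow> complex" where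
  "ss lam = (if lam = 0 then 1 else sin (om lam) / om lam)"
definition ss' :: "complex \<Rightarrow> complex" where "ss' lam = cos (om lam)"

definition M0 :: "complex \<Rightarrow> complex^2^2" where
  "M0 lam = vector [vector [cc lam, ss lam], vector [cc' lam, ss' lam]]"

definition Jmat :: "nat \<Rightarrow> complex^2^2" where
  "Jmat dl = vector [vector [1, 0], vector [0, 1 / of_nat dl]]"

definition T0 :: "nat \<Rightarrow> nat \<Rightarrow> complex \<Rightarrow> complex^2^2" where
  "T0 dB dR lam = Jmat dR ** M0 lam ** Jmat dB ** M0 lam"

definition tr2 :: "complex^2^2 \<Rightarrow> complex" where
  "tr2 A = A $ 1 $ 1 + A $ 2 $ 2"

definition mu_plus :: "nat \<Rightarrow> nat \<Rightarrow> complex \<Rightarrow> complex" where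
  "mu_plus dB dR lam = tr2 (T0 dB dR lam) / 2
     + csqrt ((tr2 (T0 dB dR lam))\<^sup>2 / 4 - det (T0 dB dR lam))"

definition mu_minus :: "nat \<Rightarrow> nat \<Rightarrow> complex \<Rightarrow> complex" where
  "mu_minus dB dR lam = tr2 (T0 dB dR lam) / 2
     - csqrt ((tr2 (T0 dB dR lam))\<^sup>2 / 4 - det (T0 dB dR lam))"

end

theory Submission
  imports Defs
begin

lemma om_sq: "(om lam)\<^sup>2 = lam" unfolding om_def by simp
lemma om_0: "om lam = 0 \<longleftrightarrow> lam = 0" unfolding om_def by simp

lemma sc_id: "ss lam * cc' lam = (cc lam)\<^sup>2 - 1"
proof (cases "lam = 0")
  case True then show ?thesis unfolding ss_def cc'_def cc_def om_def by simp
next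
  case False
  then have "om lam \<noteq> 0" using om_0 by simp
  then have "ss lam * cc' lam = - (sin (om lam))\<^sup>2" unfolding ss_def cc'_def using False
    by (simp add: power2_eq_square)
  then show ?thesis unfolding cc_def using sin_squared_eq[of "om lam"] by simp
qed

lemma ss'_cc: "ss' lam = cc lam" unfolding ss'_def cc_def by simp

lemma detM0: "det (M0 lam) = 1"
  using sc_id[of lam] unfolding det_2 M0_def ss'_cc by (simp add: power2_eq_square algebra_simps)

lemma detJ: "det (Jmat d) = 1 / of_nat d"
  unfolding det_2 Jmat_def by simp

lemma detT0: "det (T0 dB dR lam) = 1 / (of_nat dB * of_nat dR)"
  unfolding T0_def by (simp add: det_mul detM0 detJ)

lemma T0_ent:
  fixes dB dR lam
  defines "c \<equiv> cc lam" and "s \<equiv> ss lam" and "c' \<equiv> cc' lam" and "s' \<equiv> ss' lam"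
    and "p \<equiv> 1 / (of_nat dB :: complex)" and "q \<equiv> 1 / (of_nat dR :: complex)"
  shows "T0 dB dR lam $ 1 $ 1 = c * c + p * s * c'"
    "T0 dB dR lam $ 1 $ 2 = c * s + p * s * s'"
    "T0 dB dR lam $ 2 $ 1 = q * c' * c + p * q * s' * c'"
    "T0 dB dR lam $ 2 $ 2 = q * c' * s + p * q * s' * s'"
  unfolding T0_def M0_def Jmat_def matrix_matrix_mult_def assms by (simp_all add: sum_2 algebra_simps)

lemma tr_aux:
  fixes c s c' p q :: complex
  assumes "s * c' = c\<^sup>2 - 1"
  shows "c * c + p * s * c' + (q * c' * s + p * q * c * c) = c\<^sup>2 * (1 + p) * (1 + q) - (p + q)"
proof -
  have a: "p * s * c' = p * (c\<^sup>2 - 1)" using assms by (metis mult.assoc)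
  have b: "q * c' * s = q * (c\<^sup>2 - 1)" using assms by (metis mult.commute mult.assoc)
  show ?thesis unfolding a b by (simp add: algebra_simps power2_eq_square)
qed

lemma tr_T0: "tr2 (T0 dB dR lam) = (cc lam)\<^sup>2 * (1 + 1 / of_nat dB) * (1 + 1 / of_nat dR) - (1 / of_nat dB + 1 / of_nat dR)"
  unfolding tr2_def T0_ent ss'_cc by (rule tr_aux[OF sc_id])

lemma quad_aux:
  fixes t d s :: complex
  assumes "s\<^sup>2 = t\<^sup>2 / 4 - d"
  shows "(t/2 + s)\<^sup>2 - t * (t/2 + s) + d = 0" "(t/2 - s)\<^sup>2 - t * (t/2 - s) + d = 0"
    "(t/2 + s) * (t/2 - s) = d"
proof -
  have e: "s * s = t * t / 4 - d" using assms by (simp add: power2_eq_square)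
  have "(t/2 + s)\<^sup>2 - t * (t/2 + s) + d = s * s - t * t / 4 + d" by (simp add: power2_eq_square field_simps)
  then show "(t/2 + s)\<^sup>2 - t * (t/2 + s) + d = 0" using e by simp
  have "(t/2 - s)\<^sup>2 - t * (t/2 - s) + d = s * s - t * t / 4 + d" by (simp add: power2_eq_square field_simps)
  then show "(t/2 - s)\<^sup>2 - t * (t/2 - s) + d = 0" using e by simp
  have "(t/2 + s) * (t/2 - s) = t * t / 4 - s * s" by (simp add: field_simps)
  then show "(t/2 + s) * (t/2 - s) = d" using e by simp
qed

lemma mu_char:
  assumes "mu = mu_plus dB dR lam \<or> mu = mu_minus dB dR lam"
  shows "mu\<^sup>2 - tr2 (T0 dB dR lam) * mu + det (T0 dB dR lam) = 0"
  using assms quad_aux[OF power2_csqrt] unfolding mu_plus_def mu_minus_def by blast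

lemma mu_prod: "mu_plus dB dR lam * mu_minus dB dR lam = det (T0 dB dR lam)"
  using quad_aux[OF power2_csqrt] unfolding mu_plus_def mu_minus_def by blast

lemma mu_sum: "mu_plus dB dR lam + mu_minus dB dR lam = tr2 (T0 dB dR lam)"
  unfolding mu_plus_def mu_minus_def by simp

lemma eigvec:
  fixes T :: "complex^2^2"
  assumes "mu\<^sup>2 - tr2 T * mu + det T = 0"
  shows "\<exists>a1 a2. (a1 \<noteq> 0 \<or> a2 \<noteq> 0) \<and> T$1$1 * a1 + T$1$2 * a2 = mu * a1 \<and> T$2$1 * a1 + T$2$2 * a2 = mu * a2"
proof -
  have ch: "mu * mu - (T$1$1 + T$2$2) * mu + (T$1$1 * T$2$2 - T$1$2 * T$2$1) = 0"
    using assms unfolding tr2_def det_2 by (simp add: power2_eq_square)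
  show ?thesis
  proof (cases "T$1$2 \<noteq> 0")
    case True
    show ?thesis
      apply (rule exI[of _ "T$1$2"], rule exI[of _ "mu - T$1$1"])
      using True ch by (simp add: algebra_simps)
  next
    case F1: False
    show ?thesis
    proof (cases "T$2$1 \<noteq> 0")
      case True
      show ?thesis
        apply (rule exI[of _ "mu - T$2$2"], rule exI[of _ "T$2$1"])
        using True F1 ch by (simp add: algebra_simps)
    next
      case False
      then have "(mu - T$1$1) * (mu - T$2$2) = 0" using F1 ch by (simp add: algebra_simps)
      then have "mu = T$1$1 \<or> mu = T$2$2" by simp
      then show ?thesis
      proof
        assume "mu = T$1$1" then show ?thesis using F1 False
          by (intro exI[of _ 1] exI[of _ 0]) simp
      next
        assume "mu = T$2$2" then show ?thesis using F1 False
          by (intro exI[of _ 0] exI[of _ 1]) simp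
      qed
    qed
  qed
qed

lemma cos_real_bound:
  fixes z :: complex and y :: real
  assumes "cos z = of_real y" "\<bar>y\<bar> \<le> 1"
  shows "Im z = 0"
proof (rule ccontr)
  assume b: "Im z \<noteq> 0"
  let ?x = "exp (Im z)"
  have xp: "?x > 0" by simp
  have x1: "?x \<noteq> 1" using b by simp
  have ei: "exp (- Im z) = 1 / ?x" by (simp add: exp_minus field_simps)
  have "exp (- Im z) - ?x \<noteq> 0" using ei xp x1 by (auto simp: field_simps)
  moreover have "Im (cos z) = 0" using assms(1) by simp
  ultimately have "sin (Re z) = 0" unfolding Im_cos by simp
  then have "\<bar>cos (Re z)\<bar> = 1" using sin_cos_squared_add[of "Re z"] by (simp add: abs_square_eq_1)
  moreover have "?x + 1 / ?x > 2"
  proof -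
    have "(?x - 1)\<^sup>2 > 0" using x1 by simp
    then have "?x * ?x + 1 > 2 * ?x" by (simp add: power2_eq_square algebra_simps)
    then show ?thesis using xp by (simp add: field_simps)
  qed
  ultimately have "\<bar>Re (cos z)\<bar> > 1" unfolding Re_cos ei using xp
    by (simp add: abs_mult)
  then show False using assms by simp
qed


lemma X_bounds:
  fixes a b t :: real
  assumes "a > 0" "b > 0" "\<bar>t\<bar> \<le> 2 * (a * b)"
  shows "0 \<le> (t + a\<^sup>2 + b\<^sup>2) / ((1 + a\<^sup>2) * (1 + b\<^sup>2))"
    "(t + a\<^sup>2 + b\<^sup>2) / ((1 + a\<^sup>2) * (1 + b\<^sup>2)) \<le> 1"
proof -
  have pos: "(1 + a\<^sup>2) * (1 + b\<^sup>2) > 0" by (simp add: add_pos_nonneg)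
  have "0 \<le> (a - b)\<^sup>2" by simp
  then have l: "0 \<le> t + a\<^sup>2 + b\<^sup>2" using assms(3) by (simp add: power2_eq_square algebra_simps abs_le_iff)
  then show "0 \<le> (t + a\<^sup>2 + b\<^sup>2) / ((1 + a\<^sup>2) * (1 + b\<^sup>2))" using pos by simp
  have "0 \<le> (1 - a * b)\<^sup>2" by simp
  then have "t + a\<^sup>2 + b\<^sup>2 \<le> (1 + a\<^sup>2) * (1 + b\<^sup>2)" using assms(3)
    by (simp add: power2_eq_square algebra_simps abs_le_iff)
  then show "(t + a\<^sup>2 + b\<^sup>2) / ((1 + a\<^sup>2) * (1 + b\<^sup>2)) \<le> 1" using pos by simp
qed

lemma Im_lam_zero:
  assumes dB: "dB \<ge> 1" and dR: "dR \<ge> 1"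
    and mu: "mu = mu_plus dB dR lam \<and> nu = mu_minus dB dR lam \<or> mu = mu_minus dB dR lam \<and> nu = mu_plus dB dR lam"
    and nm: "cmod mu = 1 / sqrt (real (dB * dR))"
  shows "Im lam = 0"
proof -
  define a where "a = 1 / sqrt (real dB)"
  define b where "b = 1 / sqrt (real dR)"
  have ap: "a > 0" "b > 0" using dB dR unfolding a_def b_def by simp_all
  have a2: "a\<^sup>2 = 1 / real dB" "b\<^sup>2 = 1 / real dR" unfolding a_def b_def using dB dR
    by (simp_all add: power_divide)
  have nm': "cmod mu = a * b" using nm unfolding a_def b_def by (simp add: real_sqrt_mult)
  have prod: "mu * nu = det (T0 dB dR lam)" using mu mu_prod[of dB dR lam] by (auto simp: mult.commute)
  have dT: "det (T0 dB dR lam) = of_real (a\<^sup>2 * b\<^sup>2)" unfolding detT0 a2 by simp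
  have "mu * cnj mu = of_real ((cmod mu)\<^sup>2)" by (rule complex_norm_square[symmetric])
  also have "\<dots> = of_real (a\<^sup>2 * b\<^sup>2)" using nm' by (simp add: power_mult_distrib)
  finally have "mu * cnj mu = mu * nu" using prod dT by simp
  moreover have "mu \<noteq> 0" using nm' ap by auto
  ultimately have cn: "cnj mu = nu" by simp
  have sum: "mu + nu = tr2 (T0 dB dR lam)" using mu mu_sum[of dB dR lam] by (auto simp: add.commute)
  define t where "t = 2 * Re mu"
  have tr: "tr2 (T0 dB dR lam) = of_real t" unfolding t_def using sum cn complex_add_cnj[of mu] by simp
  have tb: "\<bar>t\<bar> \<le> 2 * (a * b)" unfolding t_def using abs_Re_le_cmod[of mu] nm' by simp
  define X where "X = (t + a\<^sup>2 + b\<^sup>2) / ((1 + a\<^sup>2) * (1 + b\<^sup>2))"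
  have pos: "(1 + a\<^sup>2) * (1 + b\<^sup>2) > 0" by (simp add: add_pos_nonneg)
  have "of_real t = (cc lam)\<^sup>2 * (1 + of_real (a\<^sup>2)) * (1 + of_real (b\<^sup>2)) - (of_real (a\<^sup>2) + of_real (b\<^sup>2))"
    using tr tr_T0[of dB dR lam] unfolding a2 by simp
  then have "(cc lam)\<^sup>2 * of_real ((1 + a\<^sup>2) * (1 + b\<^sup>2)) = of_real (t + a\<^sup>2 + b\<^sup>2)"
    by (simp add: algebra_simps)
  then have c2: "(cc lam)\<^sup>2 = of_real X" unfolding X_def using pos
    by (simp add: field_simps del: of_real_mult of_real_add)
  have "cos (2 * om lam) = of_real (2 * X - 1)" using c2 unfolding cc_def cos_double_cos by simp
  moreover have "\<bar>2 * X - 1\<bar> \<le> 1" using X_bounds[OF ap tb] unfolding X_def[symmetric] by simp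
  ultimately have "Im (2 * om lam) = 0" by (rule cos_real_bound)
  then have "Im (om lam) = 0" by simp
  then have "Im ((om lam)\<^sup>2) = 0" by (simp add: power2_eq_square)
  then show ?thesis using om_sq by simp
qed

locale prof =
  fixes dB dR :: nat and lam mu a1 a2 :: complex
  assumes dB1: "dB \<ge> 1" and dR1: "dR \<ge> 1"
    and eig1: "T0 dB dR lam $ 1 $ 1 * a1 + T0 dB dR lam $ 1 $ 2 * a2 = mu * a1"
    and eig2: "T0 dB dR lam $ 2 $ 1 * a1 + T0 dB dR lam $ 2 $ 2 * a2 = mu * a2"
begin

definition Cz :: "complex \<Rightarrow> complex" where "Cz z = cos (om lam * z)"
definition Sz :: "complex \<Rightarrow> complex" where "Sz z = (if om lam = 0 then z else sin (om lam * z) / om lam)"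
definition Cdz :: "complex \<Rightarrow> complex" where "Cdz z = - om lam * sin (om lam * z)"

lemma Cz_deriv: "(Cz has_field_derivative Cdz z) (at z)"
  unfolding Cz_def Cdz_def by (auto intro!: derivative_eq_intros)

lemma Sz_deriv: "(Sz has_field_derivative Cz z) (at z)"
proof (cases "om lam = 0")
  case True
  then have "Sz = (\<lambda>z. z)" unfolding Sz_def by auto
  then show ?thesis unfolding Cz_def using True by (auto intro!: derivative_eq_intros)
next
  case False
  then have "Sz = (\<lambda>z. sin (om lam * z) / om lam)" unfolding Sz_def by auto
  then show ?thesis unfolding Cz_def using False by (auto intro!: derivative_eq_intros)
qed

lemma om_sq': "om lam * (om lam * x) = lam * x"
  using om_sq[of lam] by (simp add: power2_eq_square mult.assoc[symmetric])

lemma Cdz_Sz: "Cdz z = - lam * Sz z"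
proof (cases "om lam = 0")
  case True then have "lam = 0" using om_0 by simp
  then show ?thesis unfolding Cdz_def Sz_def using True by simp
next
  case False
  have "lam * sin (om lam * z) / om lam = om lam * (om lam * sin (om lam * z)) / om lam"
    by (simp add: om_sq')
  also have "\<dots> = om lam * sin (om lam * z)" using False by simp
  finally show ?thesis unfolding Cdz_def Sz_def using False by simp
qed

lemma Cdz_deriv: "(Cdz has_field_derivative (- lam * Cz z)) (at z)"
  unfolding Cdz_def[abs_def] Cz_def
  by (auto intro!: derivative_eq_intros simp: om_sq' mult.commute)

definition Yf :: "complex \<Rightarrow> complex \<Rightarrow> complex \<Rightarrow> complex" where "Yf u1 u2 z = u1 * Cz z + u2 * Sz z"
definition Y1f :: "complex \<Rightarrow> complex \<Rightarrow> complex \<Rightarrow> complex" where "Y1f u1 u2 z = u1 * Cdz z + u2 * Cz z"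

lemma Yf_deriv: "(Yf u1 u2 has_field_derivative Y1f u1 u2 z) (at z)"
  unfolding Yf_def[abs_def] Y1f_def
  by (auto intro!: derivative_eq_intros Cz_deriv[THEN DERIV_chain2] Sz_deriv[THEN DERIV_chain2])

lemma Y1f_deriv: "(Y1f u1 u2 has_field_derivative (- lam * Yf u1 u2 z)) (at z)"
proof -
  have "(Y1f u1 u2 has_field_derivative (u1 * (- lam * Cz z) + u2 * Cdz z)) (at z)"
    unfolding Y1f_def[abs_def]
    by (auto intro!: derivative_eq_intros Cz_deriv[THEN DERIV_chain2] Cdz_deriv[THEN DERIV_chain2])
  then show ?thesis unfolding Yf_def Cdz_Sz by (simp add: algebra_simps)
qed

lemma Cz0: "Cz 0 = 1" and Sz0: "Sz 0 = 0" and Cdz0: "Cdz 0 = 0"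
  unfolding Cz_def Sz_def Cdz_def by simp_all
lemma Cz1: "Cz 1 = cc lam" and Sz1: "Sz 1 = ss lam" and Cdz1: "Cdz 1 = cc' lam" and Cz1': "Cz 1 = ss' lam"
  unfolding Cz_def Sz_def Cdz_def cc_def ss_def cc'_def ss'_def using om_0[of lam] by simp_all

lemma Yf0: "Yf u1 u2 0 = u1" and Y1f0: "Y1f u1 u2 0 = u2"
  unfolding Yf_def Y1f_def Cz0 Sz0 Cdz0 by simp_all

definition b1 where "b1 = cc lam * a1 + ss lam * a2"
definition b2 where "b2 = (cc' lam * a1 + ss' lam * a2) / of_nat dB"

lemma dBnz: "(of_nat dB :: complex) \<noteq> 0" and dRnz: "(of_nat dR :: complex) \<noteq> 0"
  using dB1 dR1 by simp_all

lemma trA1: "Yf a1 a2 1 = b1" unfolding Yf_def b1_def Cz1 Sz1 by simp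
lemma trA2: "Y1f a1 a2 1 = of_nat dB * b2" unfolding Y1f_def b2_def Cdz1 Cz1' using dBnz by simp
lemma trB1: "Yf b1 b2 1 = mu * a1"
proof -
  have "Yf b1 b2 1 = T0 dB dR lam $ 1 $ 1 * a1 + T0 dB dR lam $ 1 $ 2 * a2"
    unfolding Yf_def Cz1 Sz1 b1_def b2_def T0_ent using dBnz by (simp add: field_simps)
  then show ?thesis using eig1 by simp
qed
lemma trB2: "Y1f b1 b2 1 = of_nat dR * (mu * a2)"
proof -
  have "Y1f b1 b2 1 = of_nat dR * (T0 dB dR lam $ 2 $ 1 * a1 + T0 dB dR lam $ 2 $ 2 * a2)"
    unfolding Y1f_def Cdz1 Cz1 b1_def b2_def T0_ent ss'_cc using dBnz dRnz by (simp add: field_simps)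
  then show ?thesis using eig2 by simp
qed

definition sm :: "complex \<Rightarrow> complex" where "sm z = 3 * z^2 - 2 * z^3"
definition sm1 :: "complex \<Rightarrow> complex" where "sm1 z = 6 * z - 6 * z^2"
definition sm2 :: "complex \<Rightarrow> complex" where "sm2 z = 6 - 12 * z"

lemma sm_deriv: "(sm has_field_derivative sm1 z) (at z)"
  unfolding sm_def[abs_def] sm1_def by (auto intro!: derivative_eq_intros simp: power2_eq_square)
lemma sm1_deriv: "(sm1 has_field_derivative sm2 z) (at z)"
  unfolding sm1_def[abs_def] sm2_def by (auto intro!: derivative_eq_intros simp: power2_eq_square)
lemma sm_vals: "sm 0 = 0" "sm 1 = 1" "sm1 0 = 0" "sm1 1 = 0"
  unfolding sm_def sm1_def by simp_all

definition av :: "nat \<Rightarrow> nat \<Rightarrow> real" where "av N j = real (min j (2 * N - j))"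
definition alpha :: "nat \<Rightarrow> nat \<Rightarrow> complex" where
  "alpha N k = of_real (av N (k div 2)) * mu ^ (k div 2)"
definition beta :: "nat \<Rightarrow> nat \<Rightarrow> complex" where
  "beta N k = (if even k then 0 else of_real (av N (k div 2 + 1) - av N (k div 2)) * mu ^ (k div 2))"
definition u1 :: "nat \<Rightarrow> complex" where "u1 k = (if even k then a1 else b1)"
definition u2 :: "nat \<Rightarrow> complex" where "u2 k = (if even k then a2 else b2)"

definition P :: "nat \<Rightarrow> nat \<Rightarrow> complex \<Rightarrow> complex" where
  "P N k z = (alpha N k + beta N k * sm z) * Yf (u1 k) (u2 k) z"
definition P1 :: "nat \<Rightarrow> nat \<Rightarrow> complex \<Rightarrow> complex" where
  "P1 N k z = beta N k * sm1 z * Yf (u1 k) (u2 k) z + (alpha N k + beta N k * sm z) * Y1f (u1 k) (u2 k) z"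
definition P2 :: "nat \<Rightarrow> nat \<Rightarrow> complex \<Rightarrow> complex" where
  "P2 N k z = beta N k * sm2 z * Yf (u1 k) (u2 k) z + 2 * beta N k * sm1 z * Y1f (u1 k) (u2 k) z
     - lam * ((alpha N k + beta N k * sm z) * Yf (u1 k) (u2 k) z)"

lemma P_deriv: "(P N k has_field_derivative P1 N k z) (at z)"
  unfolding P_def[abs_def] P1_def
  by (auto intro!: derivative_eq_intros sm_deriv[THEN DERIV_chain2] Yf_deriv[THEN DERIV_chain2]
      simp: algebra_simps)

lemma P1_deriv: "(P1 N k has_field_derivative P2 N k z) (at z)"
  unfolding P1_def[abs_def] P2_def
  by (auto intro!: derivative_eq_intros sm_deriv[THEN DERIV_chain2] sm1_deriv[THEN DERIV_chain2]
      Yf_deriv[THEN DERIV_chain2] Y1f_deriv[THEN DERIV_chain2] simp: algebra_simps)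

lemma P2_cont: "continuous_on UNIV (P2 N k)"
proof -
  have "isCont (Yf u v) z" "isCont (Y1f u v) z" "isCont sm z" "isCont sm1 z" "isCont sm2 z" for u v z
    using DERIV_isCont[OF Yf_deriv] DERIV_isCont[OF Y1f_deriv] DERIV_isCont[OF sm_deriv]
      DERIV_isCont[OF sm1_deriv] unfolding sm2_def by (auto intro!: continuous_intros)
  then show ?thesis unfolding P2_def[abs_def] continuous_on_eq_continuous_at[OF open_UNIV]
    by (auto intro!: continuous_intros)
qed

lemma g_formula: "- P2 N k z - lam * P N k z = - beta N k * (sm2 z * Yf (u1 k) (u2 k) z + 2 * sm1 z * Y1f (u1 k) (u2 k) z)"
  unfolding P2_def P_def by (simp add: algebra_simps)

lemma av0: "av N 0 = 0" unfolding av_def by simp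
lemma P_0: "P N 0 z = 0" and P1_0: "P1 N 0 z = 0"
  unfolding P_def P1_def alpha_def beta_def by (simp_all add: av0)

lemma T1: "P N k 1 = P N (Suc k) 0"
proof (cases "even k")
  case True
  then have d: "Suc k div 2 = k div 2" by presburger
  show ?thesis using True unfolding P_def beta_def alpha_def u1_def u2_def d
    by (simp add: sm_vals Yf0 trA1)
next
  case False
  then have d: "Suc k div 2 = k div 2 + 1" by presburger
  show ?thesis using False unfolding P_def beta_def alpha_def u1_def u2_def d
    by (simp add: sm_vals Yf0 trB1 algebra_simps)
qed

lemma T2: "P1 N k 1 = of_nat (if even k then dB else dR) * P1 N (Suc k) 0"
proof (cases "even k")
  case True
  then have d: "Suc k div 2 = k div 2" by presburger
  show ?thesis using True unfolding P1_def beta_def alpha_def u1_def u2_def d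
    by (simp add: sm_vals Y1f0 trA2)
next
  case False
  then have d: "Suc k div 2 = k div 2 + 1" by presburger
  show ?thesis using False unfolding P1_def beta_def alpha_def u1_def u2_def d
    by (simp add: sm_vals Y1f0 trB2 algebra_simps)
qed

end

locale btree =
  fixes src tgt :: "'e \<Rightarrow> 'v" and VB VR :: "'v set" and dB dR :: nat and rt :: 'v
  assumes bt: "biregular_tree src tgt VB VR dB dR" and rtR: "rt \<in> VR"
begin

abbreviation adj where "adj \<equiv> tree_adj src tgt"

lemma disj: "VB \<inter> VR = {}" and cov: "VB \<union> VR = UNIV" and srcB: "src e \<in> VB" and tgtR: "tgt e \<in> VR"
  and injst: "inj (\<lambda>e. (src e, tgt e))"
  and finB: "v \<in> VB \<Longrightarrow> finite {e. src e = v}" and cardB: "v \<in> VB \<Longrightarrow> card {e. src e = v} = dB + 1"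
  and finR: "v \<in> VR \<Longrightarrow> finite {e. tgt e = v}" and cardR: "v \<in> VR \<Longrightarrow> card {e. tgt e = v} = dR + 1"
  and conn: "adj\<^sup>*\<^sup>* u w"
  and acyc: "\<not> (\<exists>vs. length vs \<ge> 3 \<and> distinct vs \<and>
            (\<forall>i < length vs. adj (vs ! i) (vs ! ((i + 1) mod length vs))))"
  using bt unfolding biregular_tree_def by blast+

lemma srcnR: "src e \<notin> VR" using srcB disj by blast
lemma tgtnB: "tgt e \<notin> VB" using tgtR disj by blast
lemma notR_B: "v \<notin> VR \<Longrightarrow> v \<in> VB" using cov by blast

lemma adj_sym: "adj u v \<Longrightarrow> adj v u" unfolding tree_adj_def by blast

lemma adj_sides: "adj u v \<Longrightarrow> (u \<in> VR \<longleftrightarrow> v \<notin> VR)"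
  unfolding tree_adj_def using srcnR tgtR by blast

lemma edge_adj: "adj (src e) (tgt e)" unfolding tree_adj_def by blast

definition dist :: "'v \<Rightarrow> nat" where "dist v = (LEAST n. (adj ^^ n) rt v)"

lemma dist_ex: "(adj ^^ dist v) rt v"
proof -
  obtain n where "(adj ^^ n) rt v" using rtranclp_imp_relpowp[OF conn] by blast
  thus ?thesis unfolding dist_def by (rule LeastI)
qed

lemma dist_le: "(adj ^^ n) rt v \<Longrightarrow> dist v \<le> n"
  unfolding dist_def by (rule Least_le)

lemma dist_adj: "adj u v \<Longrightarrow> dist v \<le> Suc (dist u)"
  using dist_le relpowp_Suc_I[OF dist_ex] by blast

lemma parity: "(adj ^^ n) rt v \<Longrightarrow> (v \<in> VR \<longleftrightarrow> even n)"
proof (induction n arbitrary: v)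
  case 0 then show ?case using rtR by auto
next
  case (Suc n)
  then obtain u where "(adj ^^ n) rt u" "adj u v" by (auto elim: relpowp_Suc_E)
  then show ?case using Suc.IH adj_sides by auto
qed

lemma dist_parity: "v \<in> VR \<longleftrightarrow> even (dist v)"
  using parity[OF dist_ex] .

lemma dist0: "dist v = 0 \<longleftrightarrow> v = rt"
proof
  assume "dist v = 0" then show "v = rt" using dist_ex[of v] by simp
next
  assume "v = rt" then show "dist v = 0" using dist_le[of 0 v] by simp
qed

lemma odd_src: "odd (dist (src e))" using dist_parity srcnR by blast
lemma even_tgt: "even (dist (tgt e))" using dist_parity tgtR by blast

lemma nat_par_aux: "(a::nat) \<le> Suc b \<Longrightarrow> b \<le> Suc a \<Longrightarrow> (even b \<longleftrightarrow> odd a) \<Longrightarrow> a = Suc b \<or> b = Suc a"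
  by presburger

lemma adj_dist: "adj u v \<Longrightarrow> dist v = Suc (dist u) \<or> dist u = Suc (dist v)"
proof -
  assume a: "adj u v"
  have "dist v \<le> Suc (dist u)" "dist u \<le> Suc (dist v)" using a dist_adj adj_sym by blast+
  moreover have "even (dist u) \<longleftrightarrow> odd (dist v)" using adj_sides[OF a] dist_parity by blast
  ultimately show ?thesis using nat_par_aux by blast
qed

lemma edge_dist: "dist (tgt e) = Suc (dist (src e)) \<or> dist (src e) = Suc (dist (tgt e))"
  using adj_dist[OF edge_adj] .

lemma parent_ex: "dist v = Suc n \<Longrightarrow> \<exists>u. adj u v \<and> dist u = n"
proof -
  assume a: "dist v = Suc n"
  then obtain u where u: "(adj ^^ n) rt u" "adj u v" using dist_ex[of v] by (auto elim: relpowp_Suc_E)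
  have "dist u \<le> n" using dist_le[OF u(1)] .
  moreover have "dist v \<le> Suc (dist u)" using dist_adj[OF u(2)] .
  ultimately show ?thesis using u a by auto
qed

lemma paths: "dist u1 = k \<Longrightarrow> dist u2 = k \<Longrightarrow> u1 \<noteq> u2 \<Longrightarrow>
  \<exists>ps. 3 \<le> length ps \<and> distinct ps \<and> hd ps = u1 \<and> last ps = u2 \<and> successively adj ps \<and> (\<forall>x\<in>set ps. dist x \<le> k)"
proof (induction k arbitrary: u1 u2)
  case 0 then show ?case using dist0 by auto
next
  case (Suc k)
  obtain w1 where w1: "adj w1 u1" "dist w1 = k" using parent_ex Suc.prems(1) by blast
  obtain w2 where w2: "adj w2 u2" "dist w2 = k" using parent_ex Suc.prems(2) by blast
  have a1: "adj u1 w1" using adj_sym[OF w1(1)] .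
  show ?case
  proof (cases "w1 = w2")
    case True
    have "w1 \<noteq> u1" using w1(2) Suc.prems(1) n_not_Suc_n by metis
    have "w1 \<noteq> u2" using w1(2) Suc.prems(2) n_not_Suc_n by metis
    moreover note \<open>w1 \<noteq> u1\<close>
    moreover have "successively adj [u1,w1,u2]" using a1 w2(1) True by simp
    moreover have "\<forall>x\<in>set [u1,w1,u2]. dist x \<le> Suc k" using w1(2) Suc.prems(1,2) by simp
    ultimately show ?thesis using Suc.prems(3)
      by (intro exI[of _ "[u1,w1,u2]"]) simp
  next
    case False
    then obtain qs where qs: "3 \<le> length qs" "distinct qs" "hd qs = w1" "last qs = w2" "successively adj qs"
      "\<forall>x\<in>set qs. dist x \<le> k" using Suc.IH[OF w1(2) w2(2)] by blast
    have nq1: "u1 \<notin> set qs" using qs(6) Suc.prems(1) by fastforce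
    have nq2: "u2 \<notin> set qs" using qs(6) Suc.prems(2) by fastforce
    have ne: "qs \<noteq> []" using qs(1) by auto
    have s1: "successively adj (qs @ [u2])"
      using qs(4,5) ne w2(1) by (simp add: successively_append_iff)
    have s2: "successively adj (u1 # qs @ [u2])"
      using s1 qs(3) ne a1 by (cases qs) (simp_all add: successively_Cons)
    have d: "distinct (u1 # qs @ [u2])" using qs(2) nq1 nq2 Suc.prems(3) by simp
    have l: "3 \<le> length (u1 # qs @ [u2])" using qs(1) by simp
    have st: "\<forall>x\<in>set (u1 # qs @ [u2]). dist x \<le> Suc k" using qs(6) Suc.prems(1,2) by auto
    show ?thesis using s2 d l st
      by (intro exI[of _ "u1 # qs @ [u2]"]) simp
  qed
qed

lemma parent_unique: "adj u1 v \<Longrightarrow> adj u2 v \<Longrightarrow> dist u1 = k \<Longrightarrow> dist u2 = k \<Longrightarrow> dist v = Suc k \<Longrightarrow> u1 = u2"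
proof (rule ccontr)
  assume a: "adj u1 v" "adj u2 v" "dist u1 = k" "dist u2 = k" "dist v = Suc k" "u1 \<noteq> u2"
  obtain ps where ps: "3 \<le> length ps" "distinct ps" "hd ps = u1" "last ps = u2" "successively adj ps"
      "\<forall>x\<in>set ps. dist x \<le> k" using paths[OF a(3) a(4) a(6)] by blast
  define vs where "vs = v # ps"
  have ne: "ps \<noteq> []" using ps by auto
  have vn: "v \<notin> set ps" using ps(6) a(5) by fastforce
  have "adj v u1" using adj_sym[OF a(1)] .
  have sv: "successively adj vs" unfolding vs_def using ps(3,5) ne \<open>adj v u1\<close>
    by (cases ps) (simp_all add: successively_Cons)
  have "\<forall>i < length vs. adj (vs ! i) (vs ! ((i + 1) mod length vs))"
  proof (intro allI impI)
    fix i assume i: "i < length vs"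
    show "adj (vs ! i) (vs ! ((i + 1) mod length vs))"
    proof (cases "Suc i < length vs")
      case True then show ?thesis using successively_nth[OF sv True] by simp
    next
      case False
      then have il: "i = length ps" using i unfolding vs_def by simp
      then have m: "(i+1) mod length vs = 0" unfolding vs_def by simp
      have "vs ! length ps = u2" unfolding vs_def using ps(4) ne by (simp add: last_conv_nth)
      then have "vs ! i = u2" using il by simp
      moreover have "vs ! 0 = v" unfolding vs_def by simp
      ultimately show ?thesis using a(2) m by simp
    qed
  qed
  moreover have "length vs \<ge> 3" using ps(1) unfolding vs_def by simp
  moreover have "distinct vs" using ps(2) vn unfolding vs_def by simp
  ultimately have "\<exists>vs. length vs \<ge> 3 \<and> distinct vs \<and>
            (\<forall>i < length vs. adj (vs ! i) (vs ! ((i + 1) mod length vs)))" by blast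
  then show False using acyc by simp
qed


definition lev :: "'e \<Rightarrow> nat" where "lev e = min (dist (src e)) (dist (tgt e))"

lemma lev_cases: "(even (lev e) \<and> dist (tgt e) = lev e \<and> dist (src e) = Suc (lev e)) \<or>
   (odd (lev e) \<and> dist (src e) = lev e \<and> dist (tgt e) = Suc (lev e))"
proof -
  have "odd (dist (src e))" "even (dist (tgt e))" by (rule odd_src, rule even_tgt)
  moreover note edge_dist[of e]
  ultimately show ?thesis unfolding lev_def by (elim disjE) simp_all
qed

lemma lev_even: "even (lev e) \<Longrightarrow> dist (tgt e) = lev e \<and> dist (src e) = Suc (lev e)"
  using lev_cases[of e] by metis
lemma lev_odd: "odd (lev e) \<Longrightarrow> dist (src e) = lev e \<and> dist (tgt e) = Suc (lev e)"
  using lev_cases[of e] by metis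

definition far :: "'e \<Rightarrow> 'v" where "far e = (if even (lev e) then src e else tgt e)"
definition near :: "'e \<Rightarrow> 'v" where "near e = (if even (lev e) then tgt e else src e)"

lemma dist_far: "dist (far e) = Suc (lev e)"
  unfolding far_def using lev_even lev_odd by (cases "even (lev e)") simp_all
lemma dist_near: "dist (near e) = lev e"
  unfolding near_def using lev_even lev_odd by (cases "even (lev e)") simp_all

definition inc :: "'v \<Rightarrow> 'e set" where "inc w = {e. src e = w \<or> tgt e = w}"

lemma inc_B: "w \<in> VB \<Longrightarrow> inc w = {e. src e = w}"
  unfolding inc_def using tgtnB by fastforce
lemma inc_R: "w \<in> VR \<Longrightarrow> inc w = {e. tgt e = w}"
  unfolding inc_def using srcnR by fastforce

lemma inc_fin: "finite (inc w)"
proof (cases "w \<in> VR")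
  case True then show ?thesis using inc_R finR by simp
next
  case False then have "w \<in> VB" using notR_B by simp
  then show ?thesis using inc_B finB by simp
qed

lemma inc_near_far: "e \<in> inc w \<Longrightarrow> (near e = w \<and> far e \<noteq> w) \<or> (far e = w \<and> near e \<noteq> w)"
proof -
  assume "e \<in> inc w"
  then have "src e = w \<or> tgt e = w" unfolding inc_def by simp
  moreover have "src e \<noteq> tgt e" using srcnR tgtR by metis
  ultimately show ?thesis unfolding near_def far_def by (cases "even (lev e)") auto
qed

lemma near_inc: "e \<in> inc (near e)" and far_inc: "e \<in> inc (far e)"
  unfolding inc_def near_def far_def by simp_all

lemma far_unique: "far e1 = w \<Longrightarrow> far e2 = w \<Longrightarrow> e1 = e2"
proof -
  assume a: "far e1 = w" "far e2 = w"
  have l: "lev e1 = lev e2" using dist_far[of e1] dist_far[of e2] a by simp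
  have adj1: "adj (near e1) w" using a(1) edge_adj[of e1] adj_sym[OF edge_adj[of e1]]
    unfolding near_def far_def by (cases "even (lev e1)") simp_all
  have adj2: "adj (near e2) w" using a(2) edge_adj[of e2] adj_sym[OF edge_adj[of e2]]
    unfolding near_def far_def by (cases "even (lev e2)") simp_all
  have dw: "dist w = Suc (lev e1)" using dist_far[of e1] a by simp
  have "near e1 = near e2"
    using parent_unique[OF adj1 adj2 dist_near[of e1]] dist_near[of e2] l dw by simp
  then have "src e1 = src e2 \<and> tgt e1 = tgt e2" using a l unfolding near_def far_def
    by (cases "even (lev e1)") simp_all
  then show ?thesis using injst unfolding inj_def by simp
qed

lemma far_ex: "w \<noteq> rt \<Longrightarrow> \<exists>e. far e = w"
proof -
  assume "w \<noteq> rt"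
  then obtain n where n: "dist w = Suc n" using dist0 not0_implies_Suc by metis
  then obtain u where u: "adj u w" "dist u = n" using parent_ex by blast
  then obtain e where e: "(src e = u \<and> tgt e = w) \<or> (src e = w \<and> tgt e = u)"
    unfolding tree_adj_def by blast
  have "lev e = n" using e n u(2) unfolding lev_def by auto
  then have "dist (far e) = dist w" using dist_far n by simp
  moreover have "far e = u \<or> far e = w" using e unfolding far_def by auto
  ultimately have "far e = w" using u(2) n by auto
  then show ?thesis by blast
qed

definition Ch :: "'v \<Rightarrow> 'e set" where "Ch w = {e. near e = w}"

lemma Ch_sub: "Ch w \<subseteq> inc w" unfolding Ch_def using near_inc by blast

lemma inc_split: "w \<noteq> rt \<Longrightarrow> \<exists>p. far p = w \<and> inc w = insert p (Ch w) \<and> p \<notin> Ch w"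
proof -
  assume "w \<noteq> rt"
  then obtain p where p: "far p = w" using far_ex by blast
  have "inc w = insert p (Ch w)"
  proof
    show "inc w \<subseteq> insert p (Ch w)"
      using inc_near_far far_unique p unfolding Ch_def by blast
    show "insert p (Ch w) \<subseteq> inc w" using Ch_sub p far_inc by blast
  qed
  moreover have "p \<notin> Ch w" using p inc_near_far[OF far_inc[of p]] unfolding Ch_def by simp
  ultimately show ?thesis using p by blast
qed

lemma inc_rt: "inc rt = Ch rt"
proof
  show "Ch rt \<subseteq> inc rt" by (rule Ch_sub)
  show "inc rt \<subseteq> Ch rt"
  proof
    fix e assume "e \<in> inc rt"
    moreover have "far e \<noteq> rt" using dist_far[of e] dist0[of "far e"] by simp
    ultimately show "e \<in> Ch rt" using inc_near_far unfolding Ch_def by blast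
  qed
qed

lemma card_inc: "card (inc w) = (if w \<in> VR then dR + 1 else dB + 1)"
  using inc_R cardR inc_B cardB notR_B by auto

lemma card_Ch: "w \<noteq> rt \<Longrightarrow> card (Ch w) = (if w \<in> VR then dR else dB)"
proof -
  assume "w \<noteq> rt"
  then obtain p where p: "inc w = insert p (Ch w)" "p \<notin> Ch w" using inc_split by blast
  have "finite (Ch w)" using inc_fin finite_subset[OF Ch_sub] by blast
  then have "card (inc w) = Suc (card (Ch w))" using p by simp
  then show ?thesis using card_inc[of w] by (simp split: if_splits)
qed

lemma sum_inc:
  fixes \<phi> :: "'e \<Rightarrow> complex"
  assumes "w \<noteq> rt" "\<And>e. far e = w \<Longrightarrow> \<phi> e = X" "\<And>e. near e = w \<Longrightarrow> \<phi> e = Y"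
  shows "sum \<phi> (inc w) = X + of_nat (if w \<in> VR then dR else dB) * Y"
proof -
  obtain p where p: "far p = w" "inc w = insert p (Ch w)" "p \<notin> Ch w" using inc_split assms(1) by blast
  have fin: "finite (Ch w)" using inc_fin finite_subset[OF Ch_sub] by blast
  have "sum \<phi> (inc w) = \<phi> p + sum \<phi> (Ch w)" using p fin by simp
  also have "sum \<phi> (Ch w) = sum (\<lambda>_. Y) (Ch w)" using assms(3) unfolding Ch_def by simp
  also have "\<dots> = of_nat (card (Ch w)) * Y" by simp
  finally show ?thesis using card_Ch[OF assms(1)] assms(2)[OF p(1)] by simp
qed

definition E :: "nat \<Rightarrow> 'e set" where "E k = {e. lev e = k}"

lemma E0: "E 0 = Ch rt"
proof -
  have "lev e = 0 \<longleftrightarrow> near e = rt" for e using dist_near[of e] dist0[of "near e"] by simp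
  then show ?thesis unfolding E_def Ch_def by simp
qed

lemma E_Suc: "E (Suc k) = (\<Union>e\<in>E k. Ch (far e))"
proof
  show "E (Suc k) \<subseteq> (\<Union>e\<in>E k. Ch (far e))"
  proof
    fix e' assume "e' \<in> E (Suc k)"
    then have d: "dist (near e') = Suc k" using dist_near[of e'] unfolding E_def by simp
    then have "near e' \<noteq> rt" using dist0[of "near e'"] by simp
    then obtain p where p: "far p = near e'" using far_ex by blast
    then have "lev p = k" using dist_far[of p] d by simp
    then have "p \<in> E k" unfolding E_def by simp
    moreover have "e' \<in> Ch (far p)" using p unfolding Ch_def by simp
    ultimately show "e' \<in> (\<Union>e\<in>E k. Ch (far e))" by (rule UN_I)
  qed
  show "(\<Union>e\<in>E k. Ch (far e)) \<subseteq> E (Suc k)"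
  proof
    fix e' assume "e' \<in> (\<Union>e\<in>E k. Ch (far e))"
    then obtain e where "e \<in> E k" "e' \<in> Ch (far e)" by (rule UN_E)
    then have e: "lev e = k" "near e' = far e" unfolding E_def Ch_def by simp_all
    have "lev e' = Suc k" using dist_near[of e'] dist_far[of e] e by simp
    then show "e' \<in> E (Suc k)" unfolding E_def by simp
  qed
qed

lemma Ch_fin: "finite (Ch w)" using inc_fin finite_subset[OF Ch_sub] by blast

lemma far_VR: "far e \<in> VR \<longleftrightarrow> odd (lev e)"
  using dist_parity[of "far e"] dist_far[of e] by simp

lemma E_fin_card: "finite (E k) \<and> card (E k) = (if k = 0 then dR + 1 else card (E (k - 1)) * (if even (k - 1) then dB else dR))"
proof (cases k)
  case 0
  have "card (Ch rt) = dR + 1" using inc_rt card_inc[of rt] rtR by simp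
  then show ?thesis using 0 E0 Ch_fin by simp
next
  case (Suc m)
  have fm: "finite (E m)"
  proof (induction m)
    case 0 then show ?case using E0 Ch_fin by simp
  next
    case (Suc m) then show ?case unfolding E_Suc using Ch_fin by simp
  qed
  have disj: "\<forall>e1\<in>E m. \<forall>e2\<in>E m. e1 \<noteq> e2 \<longrightarrow> Ch (far e1) \<inter> Ch (far e2) = {}"
  proof (intro ballI impI)
    fix e1 e2 :: 'e assume "e1 \<in> E m" "e2 \<in> E m" "e1 \<noteq> e2"
    then have "far e1 \<noteq> far e2" using far_unique by metis
    then show "Ch (far e1) \<inter> Ch (far e2) = {}" unfolding Ch_def by auto
  qed
  have fa: "\<forall>e\<in>E m. finite (Ch (far e))" using Ch_fin by simp
  have "card (E (Suc m)) = (\<Sum>e\<in>E m. card (Ch (far e)))"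
    unfolding E_Suc by (rule card_UN_disjoint[OF fm fa disj])
  also have "\<dots> = (\<Sum>e\<in>E m. (if even m then dB else dR))"
  proof (rule sum.cong)
    fix e assume "e \<in> E m"
    then have l: "lev e = m" unfolding E_def by simp
    have "far e \<noteq> rt" using dist_far[of e] dist0[of "far e"] by simp
    then show "card (Ch (far e)) = (if even m then dB else dR)"
      using card_Ch far_VR l by simp
  qed simp
  also have "\<dots> = card (E m) * (if even m then dB else dR)" by simp
  finally have "card (E (Suc m)) = card (E m) * (if even m then dB else dR)" .
  moreover have "finite (E (Suc m))" unfolding E_Suc using fm Ch_fin by simp
  ultimately show ?thesis using Suc by simp
qed

lemma E_fin: "finite (E k)" using E_fin_card[of k] by (rule conjunct1)

lemma card_E: "card (E (2*j)) = (dR + 1) * (dB * dR)^j \<and> card (E (2*j+1)) = (dR + 1) * dB * (dB * dR)^j"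
proof (induction j)
  case 0
  have "card (E 0) = dR + 1" using E_fin_card[of 0] by simp
  moreover have "card (E 1) = card (E 0) * dB" using E_fin_card[of 1] by simp
  ultimately show ?case by simp
next
  case (Suc j)
  have a: "card (E (2 * Suc j)) = card (E (2*j+1)) * dR" using E_fin_card[of "2 * Suc j"] by simp
  have b: "card (E (2 * Suc j + 1)) = card (E (2 * Suc j)) * dB" using E_fin_card[of "2 * Suc j + 1"] by simp
  have "card (E (2 * Suc j)) = (dR + 1) * dB * (dB * dR) ^ j * dR" using a Suc.IH by simp
  also have "\<dots> = (dR + 1) * ((dB * dR) * (dB * dR) ^ j)" by (simp only: mult_ac)
  finally have c: "card (E (2 * Suc j)) = (dR + 1) * (dB * dR) ^ Suc j" by (simp only: power_Suc)
  have "card (E (2 * Suc j + 1)) = (dR + 1) * (dB * dR) ^ Suc j * dB" using b c by simp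
  then have "card (E (2 * Suc j + 1)) = (dR + 1) * dB * (dB * dR) ^ Suc j" by (simp only: mult_ac)
  then show ?case using c by simp
qed

end

lemma lip_01:
  fixes g :: "real \<Rightarrow> complex"
  assumes d: "\<And>x. (g has_vector_derivative g' x) (at x)" and B: "\<And>x. x \<in> {0..1} \<Longrightarrow> norm (g' x) \<le> B"
    and ab: "0 \<le> a" "a \<le> b" "b \<le> 1"
  shows "norm (g b - g a) \<le> B * (b - a)"
proof (cases "a = b")
  case True then show ?thesis by simp
next
  case False
  then have lt: "a < b" using ab by simp
  have c: "continuous_on {a..b} g"
    using d has_vector_derivative_continuous continuous_at_imp_continuous_on by blast
  obtain x where x: "x \<in> {a<..<b}" "norm (g b - g a) \<le> norm ((b - a) *\<^sub>R g' x)"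
    using mvt_general[OF lt c, of "\<lambda>x h. h *\<^sub>R g' x"] d unfolding has_vector_derivative_def by blast
  have "norm ((b - a) *\<^sub>R g' x) = (b - a) * norm (g' x)" using lt by simp
  also have "\<dots> \<le> (b - a) * B" using B[of x] x(1) ab lt by (intro mult_left_mono) auto
  finally show ?thesis using x(2) by (simp add: mult.commute)
qed

lemma lip_abs_cont:
  fixes g :: "real \<Rightarrow> complex"
  assumes d: "\<And>x. (g has_vector_derivative g' x) (at x)" and c: "continuous_on {0..1} g'"
  shows "abs_cont_01 g"
proof -
  have "compact (g' ` {0..1})" using c by (intro compact_continuous_image) auto
  then obtain B0 where B0: "\<And>x. x \<in> {0..1} \<Longrightarrow> norm (g' x) \<le> B0"
    using compact_imp_bounded bounded_iff by (metis imageI)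
  define B where "B = \<bar>B0\<bar> + 1"
  have Bp: "B > 0" unfolding B_def by simp
  have B: "\<And>x. x \<in> {0..1} \<Longrightarrow> norm (g' x) \<le> B" using B0 unfolding B_def by (meson abs_ge_self add_increasing2 order_trans zero_le_one)
  show ?thesis unfolding abs_cont_01_def
  proof (intro allI impI)
    fix \<epsilon> :: real assume ep: "\<epsilon> > 0"
    show "\<exists>\<delta>>0. \<forall>(n::nat) (a::nat \<Rightarrow> real) b.
        (\<forall>i<n. 0 \<le> a i \<and> a i \<le> b i \<and> b i \<le> 1) \<and>
        (\<forall>i<n. \<forall>j<n. i \<noteq> j \<longrightarrow> b i \<le> a j \<or> b j \<le> a i) \<and>
        (\<Sum>i<n. b i - a i) < \<delta> \<longrightarrow>
        (\<Sum>i<n. cmod (g (b i) - g (a i))) < \<epsilon>"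
    proof (intro exI[of _ "\<epsilon> / B"] conjI allI impI)
      show "\<epsilon> / B > 0" using ep Bp by simp
      fix n :: nat and a b :: "nat \<Rightarrow> real"
      assume h: "(\<forall>i<n. 0 \<le> a i \<and> a i \<le> b i \<and> b i \<le> 1) \<and>
        (\<forall>i<n. \<forall>j<n. i \<noteq> j \<longrightarrow> b i \<le> a j \<or> b j \<le> a i) \<and> (\<Sum>i<n. b i - a i) < \<epsilon> / B"
      have "(\<Sum>i<n. cmod (g (b i) - g (a i))) \<le> (\<Sum>i<n. B * (b i - a i))"
        using h lip_01[OF d B] by (intro sum_mono) auto
      also have "\<dots> = B * (\<Sum>i<n. b i - a i)" by (simp add: sum_distrib_left)
      also have "\<dots> < B * (\<epsilon> / B)" using h Bp by (intro mult_strict_left_mono) auto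
      also have "\<dots> = \<epsilon>" using Bp by simp
      finally show "(\<Sum>i<n. cmod (g (b i) - g (a i))) < \<epsilon>" .
    qed
  qed
qed

lemma cont_real: "continuous_on UNIV G \<Longrightarrow> continuous_on UNIV (\<lambda>x::real. G (complex_of_real x))"
  by (rule continuous_on_compose2[of UNIV G]) (auto intro!: continuous_intros)

lemma edge_L2_cont:
  fixes G :: "complex \<Rightarrow> complex"
  assumes "continuous_on UNIV G"
  shows "set_borel_measurable lborel {0..1} (\<lambda>x. G (of_real x))"
    "set_integrable lborel {0..1} (\<lambda>x. (cmod (G (of_real x)))\<^sup>2)"
proof -
  have c: "continuous_on UNIV (\<lambda>x::real. G (of_real x))" using cont_real[OF assms] .
  show "set_borel_measurable lborel {0..1} (\<lambda>x. G (of_real x))"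
    unfolding set_borel_measurable_def
    using borel_measurable_continuous_on_indicator[of "{0..1}" "\<lambda>x::real. G (of_real x)"] c
    by (simp add: continuous_on_subset)
  have "continuous_on {0..1} (\<lambda>x::real. (cmod (G (of_real x)))\<^sup>2)"
    using c by (auto intro!: continuous_intros intro: continuous_on_subset)
  then show "set_integrable lborel {0..1} (\<lambda>x. (cmod (G (of_real x)))\<^sup>2)"
    unfolding set_integrable_def by (intro borel_integrable_compact) auto
qed

lemma edge_norm_nonneg: "edge_norm2 g \<ge> 0"
  unfolding edge_norm2_def set_lebesgue_integral_def
  by (intro Bochner_Integration.integral_nonneg) (simp add: indicator_def)

lemma edge_norm_zero: "edge_norm2 (\<lambda>x. 0) = 0"
  unfolding edge_norm2_def by simp

lemma edge_norm_scale: "edge_norm2 (\<lambda>x. c * g x) = (cmod c)\<^sup>2 * edge_norm2 g"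
  unfolding edge_norm2_def by (simp add: norm_mult power_mult_distrib)

lemma inL2_cont:
  fixes G :: "'e \<Rightarrow> complex \<Rightarrow> complex"
  assumes "\<And>e. continuous_on UNIV (G e)" "finite S" "\<And>e z. e \<notin> S \<Longrightarrow> G e z = 0"
  shows "in_L2 (\<lambda>e x. G e (of_real x))"
  unfolding in_L2_def
proof (intro conjI allI)
  fix e show "set_borel_measurable lborel {0..1} (\<lambda>x. G e (of_real x))"
    "set_integrable lborel {0..1} (\<lambda>x. (cmod (G e (of_real x)))\<^sup>2)" using edge_L2_cont[OF assms(1)] by auto
next
  have "(\<lambda>e. edge_norm2 (\<lambda>x. G e (of_real x))) summable_on UNIV \<longleftrightarrow> (\<lambda>e. edge_norm2 (\<lambda>x. G e (of_real x))) summable_on S"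
    using assms(3) edge_norm_zero by (intro summable_on_cong_neutral) auto
  then show "(\<lambda>e. edge_norm2 (\<lambda>x. G e (of_real x))) summable_on UNIV" using assms(2) by simp
qed


lemma sq_ineq: "(cmod (a - b))\<^sup>2 \<le> 2 * (cmod a)\<^sup>2 + 2 * (cmod b)\<^sup>2"
proof -
  have "cmod (a - b) \<le> cmod a + cmod b" by (rule norm_triangle_ineq4)
  then have "(cmod (a - b))\<^sup>2 \<le> (cmod a + cmod b)\<^sup>2" by (intro power_mono) auto
  also have "\<dots> \<le> 2 * (cmod a)\<^sup>2 + 2 * (cmod b)\<^sup>2"
    using sum_squares_ge_zero[of "cmod a - cmod b" 0] by (simp add: power2_eq_square algebra_simps)
  finally show ?thesis .
qed

lemma sq_meas:
  fixes F :: "real \<Rightarrow> complex"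
  assumes "set_borel_measurable lborel S F"
  shows "set_borel_measurable lborel S (\<lambda>x. (cmod (F x))\<^sup>2)"
proof -
  have eq: "(\<lambda>x. indicator S x *\<^sub>R (cmod (F x))\<^sup>2) = (\<lambda>x. (cmod (indicator S x *\<^sub>R F x))\<^sup>2)"
    by (auto simp: indicator_def)
  show ?thesis using assms unfolding set_borel_measurable_def eq by measurable
qed

lemma diff_meas:
  fixes F G :: "real \<Rightarrow> complex"
  assumes "set_borel_measurable lborel S F" "set_borel_measurable lborel S G"
  shows "set_borel_measurable lborel S (\<lambda>x. F x - G x)"
proof -
  have eq: "(\<lambda>x. indicator S x *\<^sub>R (F x - G x)) = (\<lambda>x. indicator S x *\<^sub>R F x - indicator S x *\<^sub>R G x)"
    by (auto simp: scaleR_diff_right)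
  show ?thesis using assms unfolding set_borel_measurable_def eq by measurable
qed

lemma en_diff:
  fixes F G :: "real \<Rightarrow> complex"
  assumes "set_borel_measurable lborel {0..1} F" "set_integrable lborel {0..1} (\<lambda>x. (cmod (F x))\<^sup>2)"
    "set_borel_measurable lborel {0..1} G" "set_integrable lborel {0..1} (\<lambda>x. (cmod (G x))\<^sup>2)"
  shows "set_borel_measurable lborel {0..1} (\<lambda>x. F x - G x)"
    "set_integrable lborel {0..1} (\<lambda>x. (cmod (F x - G x))\<^sup>2)"
    "edge_norm2 (\<lambda>x. F x - G x) \<le> 2 * edge_norm2 F + 2 * edge_norm2 G"
proof -
  show m: "set_borel_measurable lborel {0..1} (\<lambda>x. F x - G x)" using diff_meas assms by blast
  have ib: "set_integrable lborel {0..1} (\<lambda>x. 2 * (cmod (F x))\<^sup>2 + 2 * (cmod (G x))\<^sup>2)"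
    using assms(2,4) by auto
  show i: "set_integrable lborel {0..1} (\<lambda>x. (cmod (F x - G x))\<^sup>2)"
    by (rule set_integrable_bound[OF ib sq_meas[OF m]]) (auto simp: sq_ineq)
  have "edge_norm2 (\<lambda>x. F x - G x) \<le> (LINT x:{0..1}|lborel. 2 * (cmod (F x))\<^sup>2 + 2 * (cmod (G x))\<^sup>2)"
    unfolding edge_norm2_def by (rule set_integral_mono[OF i ib]) (rule sq_ineq)
  also have "\<dots> = 2 * edge_norm2 F + 2 * edge_norm2 G"
    unfolding edge_norm2_def using assms(2,4) by (simp add: set_integral_add)
  finally show "edge_norm2 (\<lambda>x. F x - G x) \<le> 2 * edge_norm2 F + 2 * edge_norm2 G" .
qed

lemma inL2_diff:
  assumes "in_L2 f" "in_L2 g"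
  shows "in_L2 (\<lambda>e x. f e x - g e x)"
  unfolding in_L2_def
proof (intro conjI allI)
  fix e
  show "set_borel_measurable lborel {0..1} (\<lambda>x. f e x - g e x)"
    "set_integrable lborel {0..1} (\<lambda>x. (cmod (f e x - g e x))\<^sup>2)"
    using assms unfolding in_L2_def by (intro en_diff; auto)+
next
  have s: "(\<lambda>e. 2 * edge_norm2 (f e) + 2 * edge_norm2 (g e)) summable_on UNIV"
    using assms unfolding in_L2_def by (intro summable_on_add summable_on_cmult_right) auto
  show "(\<lambda>e. edge_norm2 (\<lambda>x. f e x - g e x)) summable_on UNIV"
  proof (rule summable_on_comparison_test[OF s])
    fix e
    show "edge_norm2 (\<lambda>x. f e x - g e x) \<le> 2 * edge_norm2 (f e) + 2 * edge_norm2 (g e)"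
      using assms unfolding in_L2_def by (intro en_diff) auto
    show "0 \<le> edge_norm2 (\<lambda>x. f e x - g e x)" by (rule edge_norm_nonneg)
  qed
qed

lemma abs_cont_diff:
  assumes "abs_cont_01 f" "abs_cont_01 g"
  shows "abs_cont_01 (\<lambda>x. f x - g x)"
  unfolding abs_cont_01_def
proof (intro allI impI)
  fix \<epsilon> :: real assume ep: "\<epsilon> > 0"
  obtain d1 where d1: "d1 > 0" "\<forall>(n::nat) (a::nat \<Rightarrow> real) b.
        (\<forall>i<n. 0 \<le> a i \<and> a i \<le> b i \<and> b i \<le> 1) \<and>
        (\<forall>i<n. \<forall>j<n. i \<noteq> j \<longrightarrow> b i \<le> a j \<or> b j \<le> a i) \<and>
        (\<Sum>i<n. b i - a i) < d1 \<longrightarrow> (\<Sum>i<n. cmod (f (b i) - f (a i))) < \<epsilon>/2"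
    using assms(1)[unfolded abs_cont_01_def, rule_format, of "\<epsilon>/2"] ep by auto
  obtain d2 where d2: "d2 > 0" "\<forall>(n::nat) (a::nat \<Rightarrow> real) b.
        (\<forall>i<n. 0 \<le> a i \<and> a i \<le> b i \<and> b i \<le> 1) \<and>
        (\<forall>i<n. \<forall>j<n. i \<noteq> j \<longrightarrow> b i \<le> a j \<or> b j \<le> a i) \<and>
        (\<Sum>i<n. b i - a i) < d2 \<longrightarrow> (\<Sum>i<n. cmod (g (b i) - g (a i))) < \<epsilon>/2"
    using assms(2)[unfolded abs_cont_01_def, rule_format, of "\<epsilon>/2"] ep by auto
  show "\<exists>\<delta>>0. \<forall>(n::nat) (a::nat \<Rightarrow> real) b.
        (\<forall>i<n. 0 \<le> a i \<and> a i \<le> b i \<and> b i \<le> 1) \<and>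
        (\<forall>i<n. \<forall>j<n. i \<noteq> j \<longrightarrow> b i \<le> a j \<or> b j \<le> a i) \<and>
        (\<Sum>i<n. b i - a i) < \<delta> \<longrightarrow>
        (\<Sum>i<n. cmod ((f (b i) - g (b i)) - (f (a i) - g (a i)))) < \<epsilon>"
  proof (intro exI[of _ "min d1 d2"] conjI allI impI)
    show "min d1 d2 > 0" using d1 d2 by simp
    fix n :: nat and a b :: "nat \<Rightarrow> real"
    assume h: "(\<forall>i<n. 0 \<le> a i \<and> a i \<le> b i \<and> b i \<le> 1) \<and>
        (\<forall>i<n. \<forall>j<n. i \<noteq> j \<longrightarrow> b i \<le> a j \<or> b j \<le> a i) \<and> (\<Sum>i<n. b i - a i) < min d1 d2"
    have hs: "(\<Sum>i<n. b i - a i) < d1" "(\<Sum>i<n. b i - a i) < d2" using h by auto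
    have s1: "(\<Sum>i<n. cmod (f (b i) - f (a i))) < \<epsilon>/2"
      using d1(2)[rule_format, of n a b] h hs(1) by blast
    have s2: "(\<Sum>i<n. cmod (g (b i) - g (a i))) < \<epsilon>/2"
      using d2(2)[rule_format, of n a b] h hs(2) by blast
    have "(\<Sum>i<n. cmod ((f (b i) - g (b i)) - (f (a i) - g (a i))))
        \<le> (\<Sum>i<n. cmod (f (b i) - f (a i)) + cmod (g (b i) - g (a i)))"
    proof (rule sum_mono)
      fix i
      have "(f (b i) - g (b i)) - (f (a i) - g (a i)) = (f (b i) - f (a i)) - (g (b i) - g (a i))" by simp
      then show "cmod ((f (b i) - g (b i)) - (f (a i) - g (a i))) \<le> cmod (f (b i) - f (a i)) + cmod (g (b i) - g (a i))"
        using norm_triangle_ineq4 by metis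
    qed
    also have "\<dots> = (\<Sum>i<n. cmod (f (b i) - f (a i))) + (\<Sum>i<n. cmod (g (b i) - g (a i)))"
      by (rule sum.distrib)
    also have "\<dots> < \<epsilon>/2 + \<epsilon>/2" using s1 s2 by (rule add_strict_mono)
    finally show "(\<Sum>i<n. cmod ((f (b i) - g (b i)) - (f (a i) - g (a i)))) < \<epsilon>" by simp
  qed
qed


lemma L2_eq:
  assumes f: "in_L2 f" and g: "in_L2 g" and z: "L2_norm (\<lambda>e x. f e x - g e x) = 0"
  shows "L2_norm f = L2_norm g"
proof -
  define D where "D e = edge_norm2 (\<lambda>x. f e x - g e x)" for e
  have dL2: "in_L2 (\<lambda>e x. f e x - g e x)" by (rule inL2_diff[OF f g])
  have sD: "D summable_on UNIV" using dL2 unfolding in_L2_def D_def by simp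
  have D0: "infsum D UNIV = 0" using z unfolding L2_norm_def D_def by simp
  have De: "D e = 0" for e
  proof -
    have "infsum D {e} \<le> infsum D UNIV"
      by (rule infsum_mono_neutral) (auto simp: sD D_def edge_norm_nonneg)
    then have "D e \<le> 0" using D0 by simp
    moreover have "D e \<ge> 0" unfolding D_def by (rule edge_norm_nonneg)
    ultimately show ?thesis by simp
  qed
  have eq: "edge_norm2 (f e) = edge_norm2 (g e)" for e
  proof -
    have i: "integrable lborel (\<lambda>x. indicator {0..1} x *\<^sub>R (cmod (f e x - g e x))\<^sup>2)"
      using dL2 unfolding in_L2_def set_integrable_def by simp
    have "integral\<^sup>L lborel (\<lambda>x. indicator {0..1} x *\<^sub>R (cmod (f e x - g e x))\<^sup>2) = 0"
      using De[of e] unfolding D_def edge_norm2_def set_lebesgue_integral_def .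
    then have ae: "AE x in lborel. indicator {0..1} x *\<^sub>R (cmod (f e x - g e x))\<^sup>2 = 0"
      using integral_nonneg_eq_0_iff_AE[OF i] by (simp add: indicator_def)
    have mf: "(\<lambda>x. indicator {0..1} x *\<^sub>R (cmod (f e x))\<^sup>2) \<in> borel_measurable lborel"
      using f unfolding in_L2_def set_integrable_def by (blast intro: borel_measurable_integrable)
    have mg: "(\<lambda>x. indicator {0..1} x *\<^sub>R (cmod (g e x))\<^sup>2) \<in> borel_measurable lborel"
      using g unfolding in_L2_def set_integrable_def by (blast intro: borel_measurable_integrable)
    have "AE x in lborel. indicator {0..1} x *\<^sub>R (cmod (f e x))\<^sup>2 = indicator {0..1} x *\<^sub>R (cmod (g e x))\<^sup>2"
      using ae by eventually_elim (auto simp: indicator_def)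
    then show ?thesis unfolding edge_norm2_def set_lebesgue_integral_def
      by (rule integral_cong_AE[OF mf mg])
  qed
  show ?thesis unfolding L2_norm_def using eq by simp
qed


lemma qg_op_diff:
  assumes A: "qg_op src tgt VB VR f1 h1" and B: "qg_op src tgt VB VR f2 h2"
  shows "qg_op src tgt VB VR (\<lambda>e x. f1 e x - f2 e x) (\<lambda>e x. h1 e x - h2 e x)"
proof -
  obtain d1 dd1 where 1: "in_L2 f1" "in_L2 h1"
        "\<forall>e. \<forall>x\<in>{0..1}. (f1 e has_vector_derivative d1 e x) (at x within {0..1})"
        "\<forall>e. continuous_on {0..1} (d1 e)"
        "\<forall>e. abs_cont_01 (d1 e)"
        "\<forall>e. AE x in lborel. x \<in> {0..1} \<longrightarrow> (d1 e has_vector_derivative dd1 e x) (at x within {0..1})"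
        "in_L2 dd1"
        "\<forall>e. AE x in lborel. x \<in> {0..1} \<longrightarrow> h1 e x = - dd1 e x"
        "\<forall>v\<in>VB. \<forall>e1 e2. src e1 = v \<longrightarrow> src e2 = v \<longrightarrow> f1 e1 0 = f1 e2 0"
        "\<forall>v\<in>VR. \<forall>e1 e2. tgt e1 = v \<longrightarrow> tgt e2 = v \<longrightarrow> f1 e1 1 = f1 e2 1"
        "\<forall>v\<in>VB. (\<Sum>e\<in>{e. src e = v}. - d1 e 0) = 0"
        "\<forall>v\<in>VR. (\<Sum>e\<in>{e. tgt e = v}. d1 e 1) = 0"
    using A unfolding qg_op_def by blast
  obtain d2 dd2 where 2: "in_L2 f2" "in_L2 h2"
        "\<forall>e. \<forall>x\<in>{0..1}. (f2 e has_vector_derivative d2 e x) (at x within {0..1})"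
        "\<forall>e. continuous_on {0..1} (d2 e)"
        "\<forall>e. abs_cont_01 (d2 e)"
        "\<forall>e. AE x in lborel. x \<in> {0..1} \<longrightarrow> (d2 e has_vector_derivative dd2 e x) (at x within {0..1})"
        "in_L2 dd2"
        "\<forall>e. AE x in lborel. x \<in> {0..1} \<longrightarrow> h2 e x = - dd2 e x"
        "\<forall>v\<in>VB. \<forall>e1 e2. src e1 = v \<longrightarrow> src e2 = v \<longrightarrow> f2 e1 0 = f2 e2 0"
        "\<forall>v\<in>VR. \<forall>e1 e2. tgt e1 = v \<longrightarrow> tgt e2 = v \<longrightarrow> f2 e1 1 = f2 e2 1"
        "\<forall>v\<in>VB. (\<Sum>e\<in>{e. src e = v}. - d2 e 0) = 0"
        "\<forall>v\<in>VR. (\<Sum>e\<in>{e. tgt e = v}. d2 e 1) = 0"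
    using B unfolding qg_op_def by blast
  show ?thesis unfolding qg_op_def
  proof (rule conjI[OF inL2_diff[OF 1(1) 2(1)] conjI[OF inL2_diff[OF 1(2) 2(2)]]],
      rule exI[of _ "\<lambda>e x. d1 e x - d2 e x"], rule exI[of _ "\<lambda>e x. dd1 e x - dd2 e x"], intro conjI)
    show "in_L2 (\<lambda>e x. dd1 e x - dd2 e x)" by (rule inL2_diff[OF 1(7) 2(7)])
    show "\<forall>e. \<forall>x\<in>{0..1}. ((\<lambda>x. f1 e x - f2 e x) has_vector_derivative d1 e x - d2 e x) (at x within {0..1})"
      using 1(3) 2(3) by (auto intro!: has_vector_derivative_diff)
    show "\<forall>e. continuous_on {0..1} (\<lambda>x. d1 e x - d2 e x)"
      using 1(4) 2(4) by (auto intro!: continuous_on_diff)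
    show "\<forall>e. abs_cont_01 (\<lambda>x. d1 e x - d2 e x)"
      using 1(5) 2(5) by (auto intro!: abs_cont_diff)
    show "\<forall>e. AE x in lborel. x \<in> {0..1} \<longrightarrow> ((\<lambda>x. d1 e x - d2 e x) has_vector_derivative dd1 e x - dd2 e x) (at x within {0..1})"
    proof
      fix e
      show "AE x in lborel. x \<in> {0..1} \<longrightarrow> ((\<lambda>x. d1 e x - d2 e x) has_vector_derivative dd1 e x - dd2 e x) (at x within {0..1})"
        using 1(6)[rule_format, of e] 2(6)[rule_format, of e]
        by eventually_elim (auto intro!: has_vector_derivative_diff)
    qed
    show "\<forall>e. AE x in lborel. x \<in> {0..1} \<longrightarrow> h1 e x - h2 e x = - (dd1 e x - dd2 e x)"
    proof
      fix e
      show "AE x in lborel. x \<in> {0..1} \<longrightarrow> h1 e x - h2 e x = - (dd1 e x - dd2 e x)"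
        using 1(8)[rule_format, of e] 2(8)[rule_format, of e] by eventually_elim auto
    qed
    show "\<forall>v\<in>VB. \<forall>e1 e2. src e1 = v \<longrightarrow> src e2 = v \<longrightarrow> f1 e1 0 - f2 e1 0 = f1 e2 0 - f2 e2 0"
      using 1(9) 2(9) by metis
    show "\<forall>v\<in>VR. \<forall>e1 e2. tgt e1 = v \<longrightarrow> tgt e2 = v \<longrightarrow> f1 e1 1 - f2 e1 1 = f1 e2 1 - f2 e2 1"
      using 1(10) 2(10) by metis
    show "\<forall>v\<in>VB. (\<Sum>e\<in>{e. src e = v}. - (d1 e 0 - d2 e 0)) = 0"
    proof
      fix v assume v: "v \<in> VB"
      have "(\<Sum>e\<in>{e. src e = v}. - (d1 e 0 - d2 e 0)) = (\<Sum>e\<in>{e. src e = v}. - d1 e 0) - (\<Sum>e\<in>{e. src e = v}. - d2 e 0)"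
        by (simp add: sum_subtractf[symmetric])
      then show "(\<Sum>e\<in>{e. src e = v}. - (d1 e 0 - d2 e 0)) = 0" using 1(11) 2(11) v by simp
    qed
    show "\<forall>v\<in>VR. (\<Sum>e\<in>{e. tgt e = v}. d1 e 1 - d2 e 1) = 0"
    proof
      fix v assume v: "v \<in> VR"
      have "(\<Sum>e\<in>{e. tgt e = v}. d1 e 1 - d2 e 1) = (\<Sum>e\<in>{e. tgt e = v}. d1 e 1) - (\<Sum>e\<in>{e. tgt e = v}. d2 e 1)"
        by (rule sum_subtractf)
      then show "(\<Sum>e\<in>{e. tgt e = v}. d1 e 1 - d2 e 1) = 0" using 1(12) 2(12) v by simp
    qed
  qed
qed


lemma qg_op_I:
  assumes "in_L2 f" "in_L2 h"
        "\<forall>e. \<forall>x\<in>{0..1}. (f e has_vector_derivative d e x) (at x within {0..1})"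
        "\<forall>e. continuous_on {0..1} (d e)"
        "\<forall>e. abs_cont_01 (d e)"
        "\<forall>e. AE x in lborel. x \<in> {0..1} \<longrightarrow> (d e has_vector_derivative dd e x) (at x within {0..1})"
        "in_L2 dd"
        "\<forall>e. AE x in lborel. x \<in> {0..1} \<longrightarrow> h e x = - dd e x"
        "\<forall>v\<in>VB. \<forall>e1 e2. src e1 = v \<longrightarrow> src e2 = v \<longrightarrow> f e1 0 = f e2 0"
        "\<forall>v\<in>VR. \<forall>e1 e2. tgt e1 = v \<longrightarrow> tgt e2 = v \<longrightarrow> f e1 1 = f e2 1"
        "\<forall>v\<in>VB. (\<Sum>e\<in>{e. src e = v}. - d e 0) = 0"
        "\<forall>v\<in>VR. (\<Sum>e\<in>{e. tgt e = v}. d e 1) = 0"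
  shows "qg_op src tgt VB VR f h"
  unfolding qg_op_def using assms by blast

locale wt = btree src tgt VB VR dB dR rt + prof dB dR lam mu a1 a2
  for src tgt :: "'e \<Rightarrow> 'v" and VB VR dB dR rt lam mu a1 a2 +
  assumes nz: "a1 \<noteq> 0 \<or> a2 \<noteq> 0" and mmod: "cmod mu = 1 / sqrt (real (dB * dR))"
begin

definition EF :: "nat \<Rightarrow> 'e \<Rightarrow> complex \<Rightarrow> complex" where
  "EF N e z = (if even (lev e) then P N (lev e) (1 - z) else P N (lev e) z)"
definition EF1 :: "nat \<Rightarrow> 'e \<Rightarrow> complex \<Rightarrow> complex" where
  "EF1 N e z = (if even (lev e) then - P1 N (lev e) (1 - z) else P1 N (lev e) z)"
definition EF2 :: "nat \<Rightarrow> 'e \<Rightarrow> complex \<Rightarrow> complex" where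
  "EF2 N e z = (if even (lev e) then P2 N (lev e) (1 - z) else P2 N (lev e) z)"

lemma EF_deriv: "(EF N e has_field_derivative EF1 N e z) (at z)"
proof (cases "even (lev e)")
  case True
  then have "EF N e = (\<lambda>z. P N (lev e) (1 - z))" unfolding EF_def by auto
  have "((\<lambda>z. P N (lev e) (1 - z)) has_field_derivative P1 N (lev e) (1 - z) * (-1)) (at z)"
    by (rule DERIV_chain2[OF P_deriv]) (auto intro!: derivative_eq_intros)
  then show ?thesis unfolding EF1_def using True \<open>EF N e = _\<close> by simp
next
  case False
  then have "EF N e = P N (lev e)" unfolding EF_def by auto
  then show ?thesis unfolding EF1_def using False P_deriv by simp
qed

lemma EF1_deriv: "(EF1 N e has_field_derivative EF2 N e z) (at z)"
proof (cases "even (lev e)")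
  case True
  then have "EF1 N e = (\<lambda>z. - P1 N (lev e) (1 - z))" unfolding EF1_def by auto
  have "((\<lambda>z. P1 N (lev e) (1 - z)) has_field_derivative P2 N (lev e) (1 - z) * (-1)) (at z)"
    by (rule DERIV_chain2[OF P1_deriv]) (auto intro!: derivative_eq_intros)
  then have "((\<lambda>z. - P1 N (lev e) (1 - z)) has_field_derivative - (P2 N (lev e) (1 - z) * (-1))) (at z)"
    by (rule DERIV_minus)
  then show ?thesis unfolding EF2_def using True \<open>EF1 N e = _\<close> by simp
next
  case False
  then have "EF1 N e = P1 N (lev e)" unfolding EF1_def by auto
  then show ?thesis unfolding EF2_def using False P1_deriv by simp
qed

lemma EF_cont: "continuous_on UNIV (EF N e)"
  using DERIV_isCont[OF EF_deriv] by (simp add: continuous_at_imp_continuous_on)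
lemma EF1_cont: "continuous_on UNIV (EF1 N e)"
  using DERIV_isCont[OF EF1_deriv] by (simp add: continuous_at_imp_continuous_on)
lemma EF2_cont: "continuous_on UNIV (EF2 N e)"
proof (cases "even (lev e)")
  case True
  then have "EF2 N e = (\<lambda>z. P2 N (lev e) (1 - z))" unfolding EF2_def by auto
  moreover have "continuous_on UNIV (\<lambda>z. P2 N (lev e) (1 - z))"
    by (rule continuous_on_compose2[OF P2_cont]) (auto intro!: continuous_intros)
  ultimately show ?thesis by simp
next
  case False
  then have "EF2 N e = P2 N (lev e)" unfolding EF2_def by auto
  then show ?thesis using P2_cont by simp
qed

definition fN :: "nat \<Rightarrow> 'e \<Rightarrow> real \<Rightarrow> complex" where "fN N e x = EF N e (of_real x)"
definition dN :: "nat \<Rightarrow> 'e \<Rightarrow> real \<Rightarrow> complex" where "dN N e x = EF1 N e (of_real x)"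
definition ddN :: "nat \<Rightarrow> 'e \<Rightarrow> real \<Rightarrow> complex" where "ddN N e x = EF2 N e (of_real x)"
definition hN :: "nat \<Rightarrow> 'e \<Rightarrow> real \<Rightarrow> complex" where "hN N e x = - EF2 N e (of_real x)"
definition gN :: "nat \<Rightarrow> 'e \<Rightarrow> real \<Rightarrow> complex" where "gN N e x = hN N e x - lam * fN N e x"

lemma fN_deriv: "(fN N e has_vector_derivative dN N e x) (at x within S)"
  unfolding fN_def[abs_def] dN_def by (rule has_vector_derivative_real_field[OF EF_deriv])
lemma dN_deriv: "(dN N e has_vector_derivative ddN N e x) (at x within S)"
  unfolding dN_def[abs_def] ddN_def by (rule has_vector_derivative_real_field[OF EF1_deriv])

definition S :: "nat \<Rightarrow> 'e set" where "S N = (\<Union>k\<in>{..<4*N}. E k)"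

lemma S_fin: "finite (S N)" unfolding S_def using E_fin by simp

lemma av_zero: "j \<ge> 2 * N \<Longrightarrow> av N j = 0" unfolding av_def by simp

lemma P_zero: assumes "k \<ge> 4 * N" shows "P N k z = 0" "P1 N k z = 0" "P2 N k z = 0"
proof -
  have "k div 2 \<ge> 2 * N" "k div 2 + 1 \<ge> 2 * N" using assms by auto
  then have "alpha N k = 0" "beta N k = 0" unfolding alpha_def beta_def using av_zero by auto
  then show "P N k z = 0" "P1 N k z = 0" "P2 N k z = 0" unfolding P_def P1_def P2_def by simp_all
qed

lemma notS: "e \<notin> S N \<Longrightarrow> lev e \<ge> 4 * N" unfolding S_def E_def by force

lemma EF_zero: "e \<notin> S N \<Longrightarrow> EF N e z = 0 \<and> EF1 N e z = 0 \<and> EF2 N e z = 0"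
  using P_zero[OF notS] unfolding EF_def EF1_def EF2_def by simp

lemma vv0: "EF N e 0 = P N (dist (src e)) 0"
proof (cases "even (lev e)")
  case True then show ?thesis unfolding EF_def using lev_even[OF True] T1 by simp
next
  case False then show ?thesis unfolding EF_def using lev_odd[OF False] by simp
qed

lemma vv1: "EF N e 1 = P N (dist (tgt e)) 0"
proof (cases "even (lev e)")
  case True then show ?thesis unfolding EF_def using lev_even[OF True] by simp
next
  case False then show ?thesis unfolding EF_def using lev_odd[OF False] T1 by simp
qed

lemma kirchB: assumes v: "v \<in> VB" shows "(\<Sum>e\<in>{e. src e = v}. - dN N e 0) = 0"
proof -
  have vnr: "v \<noteq> rt" using v rtR disj by blast
  have vR: "v \<notin> VR" using v disj by blast
  have "odd (dist v)" using dist_parity vR by simp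
  then obtain m where m: "dist v = Suc m" "even m" by (metis oddE add.commute plus_1_eq_Suc even_mult_iff even_numeral)
  have "(\<Sum>e\<in>inc v. - dN N e 0) = P1 N m 1 + of_nat (if v \<in> VR then dR else dB) * (- P1 N (Suc m) 0)"
  proof (rule sum_inc[OF vnr])
    fix e assume f: "far e = v"
    have ev: "even (lev e)" using f srcnR tgtR vR unfolding far_def by (metis)
    have "lev e = m" using dist_far[of e] f m by simp
    then show "- dN N e 0 = P1 N m 1" unfolding dN_def EF1_def using ev by simp
  next
    fix e assume n: "near e = v"
    have od: "odd (lev e)" using n tgtR vR unfolding near_def by metis
    have "lev e = Suc m" using dist_near[of e] n m by simp
    then show "- dN N e 0 = - P1 N (Suc m) 0" unfolding dN_def EF1_def using od by simp
  qed
  also have "\<dots> = 0" using T2[of N m] m(2) vR by simp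
  finally show ?thesis using inc_B[OF v] by simp
qed

lemma kirchR: assumes v: "v \<in> VR" shows "(\<Sum>e\<in>{e. tgt e = v}. dN N e 1) = 0"
proof (cases "v = rt")
  case True
  have "(\<Sum>e\<in>inc rt. dN N e 1) = (\<Sum>e\<in>inc rt. 0)"
  proof (rule sum.cong)
    fix e assume "e \<in> inc rt"
    then have "near e = rt" using inc_rt unfolding Ch_def by blast
    then have "lev e = 0" using dist_near[of e] dist0[of rt] by simp
    then show "dN N e 1 = 0" unfolding dN_def EF1_def using P1_0 by simp
  qed simp
  then show ?thesis using inc_R[OF v] True by simp
next
  case vnr: False
  have "even (dist v)" using dist_parity v by simp
  moreover have "dist v \<noteq> 0" using dist0 vnr by simp
  ultimately obtain m where m: "dist v = Suc m" "odd m" by (metis even_Suc not0_implies_Suc)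
  have "(\<Sum>e\<in>inc v. dN N e 1) = P1 N m 1 + of_nat (if v \<in> VR then dR else dB) * (- P1 N (Suc m) 0)"
  proof (rule sum_inc[OF vnr])
    fix e assume f: "far e = v"
    have od: "odd (lev e)" using f srcnR v unfolding far_def by metis
    have "lev e = m" using dist_far[of e] f m by simp
    then show "dN N e 1 = P1 N m 1" unfolding dN_def EF1_def using od by simp
  next
    fix e assume n: "near e = v"
    have ev: "even (lev e)" using n srcnR v unfolding near_def by metis
    have "lev e = Suc m" using dist_near[of e] n m by simp
    then show "dN N e 1 = - P1 N (Suc m) 0" unfolding dN_def EF1_def using ev by simp
  qed
  also have "\<dots> = 0" using T2[of N m] m(2) v by simp
  finally show ?thesis using inc_R[OF v] by simp
qed

lemma qg_fN: "qg_op src tgt VB VR (fN N) (hN N)"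
proof (rule qg_op_I[where d="dN N" and dd="ddN N"])
  show "in_L2 (fN N)" unfolding fN_def[abs_def]
    by (rule inL2_cont[OF EF_cont S_fin]) (use EF_zero in blast)
  show "in_L2 (hN N)" unfolding hN_def[abs_def]
    by (rule inL2_cont[of "\<lambda>e z. - EF2 N e z", OF _ S_fin]) (use EF_zero[of _ N] in \<open>auto intro!: continuous_intros EF2_cont\<close>)
  show "in_L2 (ddN N)" unfolding ddN_def[abs_def]
    by (rule inL2_cont[OF EF2_cont S_fin]) (use EF_zero in blast)
  show "\<forall>e. \<forall>x\<in>{0..1}. (fN N e has_vector_derivative dN N e x) (at x within {0..1})"
    using fN_deriv by simp
  show "\<forall>e. continuous_on {0..1} (dN N e)"
  proof
    fix e
    show "continuous_on {0..1} (dN N e)"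
      by (rule continuous_at_imp_continuous_on)
        (use has_vector_derivative_continuous[OF dN_deriv[of N e _ UNIV]] in simp)
  qed
  show "\<forall>e. abs_cont_01 (dN N e)"
  proof
    fix e
    have "continuous_on {0..1} (ddN N e)" unfolding ddN_def[abs_def]
      by (rule continuous_on_subset[OF cont_real[OF EF2_cont]]) simp
    then show "abs_cont_01 (dN N e)" by (rule lip_abs_cont[OF dN_deriv])
  qed
  show "\<forall>e. AE x in lborel. x \<in> {0..1} \<longrightarrow> (dN N e has_vector_derivative ddN N e x) (at x within {0..1})"
    using dN_deriv by simp
  show "\<forall>e. AE x in lborel. x \<in> {0..1} \<longrightarrow> hN N e x = - ddN N e x"
    unfolding hN_def ddN_def by simp
  show "\<forall>v\<in>VB. \<forall>e1 e2. src e1 = v \<longrightarrow> src e2 = v \<longrightarrow> fN N e1 0 = fN N e2 0"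
    unfolding fN_def using vv0 by simp
  show "\<forall>v\<in>VR. \<forall>e1 e2. tgt e1 = v \<longrightarrow> tgt e2 = v \<longrightarrow> fN N e1 1 = fN N e2 1"
    unfolding fN_def using vv1 by simp
  show "\<forall>v\<in>VB. (\<Sum>e\<in>{e. src e = v}. - dN N e 0) = 0" using kirchB by blast
  show "\<forall>v\<in>VR. (\<Sum>e\<in>{e. tgt e = v}. dN N e 1) = 0" using kirchR by blast
qed


definition WB :: "complex \<Rightarrow> complex" where "WB z = sm2 z * Yf b1 b2 z + 2 * sm1 z * Y1f b1 b2 z"

lemma WB_cont: "continuous_on UNIV WB"
proof -
  have "isCont (Yf u v) z" "isCont (Y1f u v) z" "isCont sm1 z" "isCont sm2 z" for u v z
    using DERIV_isCont[OF Yf_deriv] DERIV_isCont[OF Y1f_deriv]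
      DERIV_isCont[OF sm1_deriv] unfolding sm2_def by (auto intro!: continuous_intros)
  then show ?thesis unfolding WB_def[abs_def] continuous_on_eq_continuous_at[OF open_UNIV]
    by (auto intro!: continuous_intros)
qed

lemma gN_formula: "gN N e x = - beta N (lev e) * WB (of_real x)"
proof (cases "even (lev e)")
  case True
  then have b: "beta N (lev e) = 0" unfolding beta_def by simp
  have "- P2 N (lev e) (1 - of_real x) - lam * P N (lev e) (1 - of_real x) = 0"
    using g_formula[of N "lev e" "1 - of_real x"] b by simp
  then show ?thesis unfolding gN_def hN_def fN_def EF_def EF2_def using True b by simp
next
  case False
  have "- P2 N (lev e) (of_real x) - lam * P N (lev e) (of_real x) = - beta N (lev e) * WB (of_real x)"
    using g_formula[of N "lev e" "of_real x"] False unfolding WB_def u1_def u2_def by simp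
  then show ?thesis unfolding gN_def hN_def fN_def EF_def EF2_def using False by simp
qed

lemma beta_zero: "lev e \<ge> 4 * N \<Longrightarrow> beta N (lev e) = 0"
proof -
  assume "lev e \<ge> 4 * N"
  then have "lev e div 2 \<ge> 2 * N" "lev e div 2 + 1 \<ge> 2 * N" by auto
  then show ?thesis unfolding beta_def using av_zero by auto
qed

lemma gN_L2: "in_L2 (gN N)"
proof -
  have "in_L2 (\<lambda>e x. (\<lambda>e z. - beta N (lev e) * WB z) e (of_real x))"
  proof (rule inL2_cont[OF _ S_fin])
    show "continuous_on UNIV ((\<lambda>e z. - beta N (lev e) * WB z) e)" for e
      using WB_cont by (auto intro!: continuous_intros)
    show "(\<lambda>e z. - beta N (lev e) * WB z) e z = 0" if "e \<notin> S N" for e z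
      using beta_zero[OF notS[OF that]] by simp
  qed
  moreover have "gN N = (\<lambda>e x. (\<lambda>e z. - beta N (lev e) * WB z) e (of_real x))"
    by (intro ext) (simp add: gN_formula)
  ultimately show ?thesis by simp
qed

definition KB where "KB = edge_norm2 (\<lambda>x. WB (of_real x))"

lemma en_gN: "edge_norm2 (gN N e) = (cmod (beta N (lev e)))\<^sup>2 * KB"
proof -
  have 1: "edge_norm2 (\<lambda>x. (- beta N (lev e)) * WB (of_real x)) = (cmod (- beta N (lev e)))\<^sup>2 * KB"
    unfolding KB_def by (rule edge_norm_scale)
  have 2: "gN N e = (\<lambda>x. (- beta N (lev e)) * WB (of_real x))" by (rule ext) (simp add: gN_formula)
  show ?thesis unfolding 2 1 by simp
qed

lemma KB_nonneg: "KB \<ge> 0" unfolding KB_def by (rule edge_norm_nonneg)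

lemma mu2: "(cmod mu)\<^sup>2 = 1 / (real dB * real dR)"
  using mmod dB1 dR1 by (simp add: power_divide)

lemma mu2j: "(cmod mu) ^ (2 * j) * (real dB * real dR) ^ j = 1"
proof -
  have "(cmod mu) ^ (2 * j) = (1 / (real dB * real dR)) ^ j" by (simp add: power_mult mu2)
  then show ?thesis using dB1 dR1 by (simp add: power_divide)
qed

lemma card_E_real: "real (card (E (2*j))) = real (dR + 1) * (real dB * real dR) ^ j"
  "real (card (E (2*j+1))) = real (dR + 1) * real dB * (real dB * real dR) ^ j"
proof -
  have "card (E (2*j)) = (dR + 1) * (dB * dR) ^ j" using card_E[of j] by (rule conjunct1)
  then have "real (card (E (2*j))) = real ((dR + 1) * (dB * dR) ^ j)" by (rule arg_cong)
  then show "real (card (E (2*j))) = real (dR + 1) * (real dB * real dR) ^ j" by (simp only: of_nat_mult of_nat_power)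
  have "card (E (2*j+1)) = (dR + 1) * dB * (dB * dR) ^ j" using card_E[of j] by (rule conjunct2)
  then have "real (card (E (2*j+1))) = real ((dR + 1) * dB * (dB * dR) ^ j)" by (rule arg_cong)
  then show "real (card (E (2*j+1))) = real (dR + 1) * real dB * (real dB * real dR) ^ j" by (simp only: of_nat_mult of_nat_power)
qed

lemma av_diff: "\<bar>av N (j + 1) - av N j\<bar> \<le> 1"
  unfolding av_def by auto

lemma card_beta: "real (card (E k)) * (cmod (beta N k))\<^sup>2 \<le> real (dR + 1) * real dB"
proof (cases "even k")
  case True then show ?thesis unfolding beta_def by simp
next
  case False
  then obtain j where k: "k = 2 * j + 1" by (metis oddE)
  then have kd: "k div 2 = j" by simp
  have c: "real (card (E k)) = real (dR + 1) * real dB * (real dB * real dR) ^ j"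
    using card_E_real(2)[of j] k by simp
  have b: "(cmod (beta N k))\<^sup>2 = (av N (j + 1) - av N j)\<^sup>2 * (cmod mu) ^ (2 * j)"
  proof -
    have "beta N k = of_real (av N (j + 1) - av N j) * mu ^ j" unfolding beta_def using False kd by simp
    then have "(cmod (beta N k))\<^sup>2 = (\<bar>av N (j + 1) - av N j\<bar> * cmod mu ^ j)\<^sup>2"
      by (simp only: norm_mult norm_power norm_of_real)
    also have "\<dots> = (av N (j + 1) - av N j)\<^sup>2 * (cmod mu ^ j)\<^sup>2" by (simp add: power_mult_distrib)
    also have "(cmod mu ^ j)\<^sup>2 = cmod mu ^ (2 * j)" by (metis power_mult mult.commute)
    finally show ?thesis .
  qed
  have d: "(av N (j + 1) - av N j)\<^sup>2 \<le> 1" using av_diff[of N j] by (simp add: abs_le_square_iff power2_eq_square abs_le_iff) (smt (verit) mult_le_one mult_minus_left mult_minus_right)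
  have "real (card (E k)) * (cmod (beta N k))\<^sup>2 =
      real (dR + 1) * real dB * ((av N (j + 1) - av N j)\<^sup>2 * ((cmod mu) ^ (2 * j) * (real dB * real dR) ^ j))"
    unfolding c b by (simp add: algebra_simps)
  also have "\<dots> = real (dR + 1) * real dB * (av N (j + 1) - av N j)\<^sup>2" using mu2j by simp
  also have "\<dots> \<le> real (dR + 1) * real dB * 1" using d by (intro mult_left_mono) auto
  finally show ?thesis by simp
qed

lemma E_disj: "i \<noteq> j \<Longrightarrow> E i \<inter> E j = {}" unfolding E_def by auto

lemma gN_norm: "(L2_norm (gN N))\<^sup>2 \<le> real (4 * N) * (real (dR + 1) * real dB * KB)"
proof -
  have nn: "infsum (\<lambda>e. edge_norm2 (gN N e)) UNIV \<ge> 0" by (rule infsum_nonneg) (rule edge_norm_nonneg)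
  have "infsum (\<lambda>e. edge_norm2 (gN N e)) UNIV = infsum (\<lambda>e. edge_norm2 (gN N e)) (S N)"
  proof (rule infsum_cong_neutral)
    fix e assume "e \<in> UNIV - S N"
    then show "edge_norm2 (gN N e) = 0" using en_gN beta_zero[OF notS] by simp
  qed auto
  also have "\<dots> = (\<Sum>e\<in>S N. edge_norm2 (gN N e))" using S_fin by simp
  also have "\<dots> = (\<Sum>k<4*N. \<Sum>e\<in>E k. edge_norm2 (gN N e))"
    unfolding S_def by (rule sum.UNION_disjoint) (auto simp: E_fin E_disj)
  also have "\<dots> = (\<Sum>k<4*N. real (card (E k)) * (cmod (beta N k))\<^sup>2 * KB)"
  proof (rule sum.cong)
    fix k assume "k \<in> {..<4*N}"
    have "(\<Sum>e\<in>E k. edge_norm2 (gN N e)) = (\<Sum>e\<in>E k. (cmod (beta N k))\<^sup>2 * KB)"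
      by (rule sum.cong) (auto simp: en_gN E_def)
    then show "(\<Sum>e\<in>E k. edge_norm2 (gN N e)) = real (card (E k)) * (cmod (beta N k))\<^sup>2 * KB" by simp
  qed simp
  also have "\<dots> \<le> (\<Sum>k<4*N. real (dR + 1) * real dB * KB)"
    by (rule sum_mono) (use card_beta KB_nonneg in \<open>auto intro: mult_right_mono\<close>)
  also have "\<dots> = real (4 * N) * (real (dR + 1) * real dB * KB)" by simp
  finally have "infsum (\<lambda>e. edge_norm2 (gN N e)) UNIV \<le> real (4 * N) * (real (dR + 1) * real dB * KB)" .
  then show ?thesis unfolding L2_norm_def using nn by simp
qed

definition IA where "IA = edge_norm2 (\<lambda>x. Yf a1 a2 (1 - of_real x))"

lemma fN_E2N: "e \<in> E (2 * N) \<Longrightarrow> fN N e = (\<lambda>x. (of_real (real N) * mu ^ N) * Yf a1 a2 (1 - of_real x))"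
proof -
  assume "e \<in> E (2 * N)"
  then have l: "lev e = 2 * N" unfolding E_def by simp
  have "av N N = real N" unfolding av_def by simp
  then show ?thesis unfolding fN_def[abs_def] EF_def P_def l alpha_def beta_def u1_def u2_def by simp
qed

lemma fN_norm: "(L2_norm (fN N))\<^sup>2 \<ge> real (dR + 1) * (real N)\<^sup>2 * IA"
proof -
  have s: "(\<lambda>e. edge_norm2 (fN N e)) summable_on UNIV" using qg_fN[of N] unfolding qg_op_def in_L2_def by blast
  have nn: "infsum (\<lambda>e. edge_norm2 (fN N e)) UNIV \<ge> 0" by (rule infsum_nonneg) (rule edge_norm_nonneg)
  have "(\<Sum>e\<in>E (2*N). edge_norm2 (fN N e)) = (\<Sum>e\<in>E (2*N). (real N)\<^sup>2 * (cmod mu) ^ (2 * N) * IA)"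
  proof (rule sum.cong)
    fix e assume e: "e \<in> E (2 * N)"
    have "edge_norm2 (fN N e) = (cmod (of_real (real N) * mu ^ N))\<^sup>2 * IA"
      unfolding fN_E2N[OF e] IA_def by (rule edge_norm_scale)
    also have "(cmod (of_real (real N) * mu ^ N))\<^sup>2 = (real N * cmod mu ^ N)\<^sup>2"
      by (simp only: norm_mult norm_power norm_of_real abs_of_nat)
    also have "\<dots> = (real N)\<^sup>2 * (cmod mu ^ N)\<^sup>2" by (simp add: power_mult_distrib)
    also have "(cmod mu ^ N)\<^sup>2 = cmod mu ^ (2 * N)" by (metis power_mult mult.commute)
    finally show "edge_norm2 (fN N e) = (real N)\<^sup>2 * (cmod mu) ^ (2 * N) * IA" .
  qed simp
  also have "\<dots> = real (card (E (2*N))) * (real N)\<^sup>2 * (cmod mu) ^ (2 * N) * IA" by simp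
  also have "\<dots> = real (dR + 1) * (real N)\<^sup>2 * IA * ((cmod mu) ^ (2 * N) * (real dB * real dR) ^ N)"
    using card_E_real(1)[of N] by (simp add: algebra_simps)
  also have "\<dots> = real (dR + 1) * (real N)\<^sup>2 * IA" using mu2j by simp
  finally have eq: "(\<Sum>e\<in>E (2*N). edge_norm2 (fN N e)) = real (dR + 1) * (real N)\<^sup>2 * IA" .
  have "infsum (\<lambda>e. edge_norm2 (fN N e)) (E (2*N)) \<le> infsum (\<lambda>e. edge_norm2 (fN N e)) UNIV"
    by (rule infsum_mono_neutral) (auto simp: s E_fin edge_norm_nonneg)
  then have "real (dR + 1) * (real N)\<^sup>2 * IA \<le> infsum (\<lambda>e. edge_norm2 (fN N e)) UNIV"
    using eq E_fin by simp
  then show ?thesis unfolding L2_norm_def using nn by simp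
qed


lemma IA_pos: "IA > 0"
proof (rule ccontr)
  assume "\<not> IA > 0"
  moreover have "IA \<ge> 0" unfolding IA_def by (rule edge_norm_nonneg)
  ultimately have I0: "IA = 0" by simp
  define G where "G z = Yf a1 a2 (1 - z)" for z
  define G' where "G' z = - Y1f a1 a2 (1 - z)" for z
  have Gd: "(G has_field_derivative G' z) (at z)" for z
  proof -
    have "((\<lambda>z. Yf a1 a2 (1 - z)) has_field_derivative Y1f a1 a2 (1 - z) * (-1)) (at z)"
      by (rule DERIV_chain2[OF Yf_deriv]) (auto intro!: derivative_eq_intros)
    then show ?thesis unfolding G_def[abs_def] G'_def by simp
  qed
  have Gc: "continuous_on UNIV G" using DERIV_isCont[OF Gd] by (simp add: continuous_at_imp_continuous_on)
  define q where "q x = (cmod (G (of_real x)))\<^sup>2" for x :: real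
  have si: "set_integrable lborel {0..1} q" unfolding q_def using edge_L2_cont(2)[OF Gc] .
  have "IA = integral {0..1} q" unfolding IA_def edge_norm2_def q_def G_def
    using set_borel_integral_eq_integral(2)[OF si[unfolded q_def G_def]] by simp
  then have "(q has_integral 0) (cbox 0 1)"
    using set_borel_integral_eq_integral(1)[OF si] I0 has_integral_integral by (metis cbox_interval)
  moreover have "continuous_on (cbox 0 1) q" unfolding q_def
    using cont_real[OF Gc] by (auto intro!: continuous_intros intro: continuous_on_subset)
  ultimately have q0: "q x = 0" if "x \<in> {0..1}" for x
    using has_integral_0_cbox_imp_0[of 0 1 q x] that unfolding q_def by (auto simp: cbox_interval)
  have G0: "G (of_real x) = 0" if "x \<in> {0..1}" for x using q0[OF that] unfolding q_def by simp
  have a1: "a1 = 0" using G0[of 1] unfolding G_def by (simp add: Yf0)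
  have d1: "((\<lambda>x. G (of_real x)) has_vector_derivative G' (of_real 1)) (at 1 within {0..1})"
    by (rule has_vector_derivative_real_field[OF Gd])
  have d2: "((\<lambda>x. G (of_real x)) has_vector_derivative 0) (at 1 within {0..1})"
    by (rule has_vector_derivative_transform[of 1 "{0..1}" _ "\<lambda>x. 0"]) (auto simp: G0)
  have "at (1::real) within {0..1} = at_left 1" by (rule at_within_Icc_at_left) simp
  then have "at (1::real) within {0..1} \<noteq> bot" using trivial_limit_at_left_real[of 1] by simp
  then have "G' (of_real 1) = 0" using vector_derivative_unique_within d1 d2 by blast
  then have "a2 = 0" unfolding G'_def by (simp add: Y1f0)
  then show False using a1 nz by simp
qed

lemma not_resolvent: "lam \<notin> qg_resolvent_set src tgt VB VR"
proof
  assume "lam \<in> qg_resolvent_set src tgt VB VR"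
  then obtain C :: real where
    sur: "\<And>g. in_L2 g \<Longrightarrow> \<exists>f h. qg_op src tgt VB VR f h \<and>
          (\<forall>e. AE x in lborel. x \<in> {0..1} \<longrightarrow> h e x - lam * f e x = g e x) \<and>
          L2_norm f \<le> C * L2_norm g" and
    inj: "\<And>f h. qg_op src tgt VB VR f h \<Longrightarrow>
          (\<forall>e. AE x in lborel. x \<in> {0..1} \<longrightarrow> h e x - lam * f e x = 0) \<Longrightarrow> L2_norm f = 0"
    unfolding qg_resolvent_set_def by blast
  have key: "real (dR + 1) * (real N)\<^sup>2 * IA \<le> C\<^sup>2 * (real (4 * N) * (real (dR + 1) * real dB * KB))" for N
  proof -
    obtain f h where fh: "qg_op src tgt VB VR f h"
      "\<forall>e. AE x in lborel. x \<in> {0..1} \<longrightarrow> h e x - lam * f e x = gN N e x"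
      "L2_norm f \<le> C * L2_norm (gN N)" using sur[OF gN_L2] by blast
    have q: "qg_op src tgt VB VR (\<lambda>e x. fN N e x - f e x) (\<lambda>e x. hN N e x - h e x)"
      by (rule qg_op_diff[OF qg_fN fh(1)])
    have "\<forall>e. AE x in lborel. x \<in> {0..1} \<longrightarrow> (hN N e x - h e x) - lam * (fN N e x - f e x) = 0"
    proof
      fix e show "AE x in lborel. x \<in> {0..1} \<longrightarrow> (hN N e x - h e x) - lam * (fN N e x - f e x) = 0"
        using fh(2)[rule_format, of e] by eventually_elim (auto simp: gN_def algebra_simps)
    qed
    then have "L2_norm (\<lambda>e x. fN N e x - f e x) = 0" using inj[OF q] by blast
    moreover have "in_L2 (fN N)" using qg_fN unfolding qg_op_def by blast
    moreover have "in_L2 f" using fh(1) unfolding qg_op_def by blast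
    ultimately have "L2_norm (fN N) = L2_norm f" using L2_eq by blast
    then have le: "L2_norm (fN N) \<le> C * L2_norm (gN N)" using fh(3) by simp
    have "infsum (\<lambda>e. edge_norm2 (fN N e)) UNIV \<ge> 0" by (rule infsum_nonneg) (rule edge_norm_nonneg)
    then have "L2_norm (fN N) \<ge> 0" unfolding L2_norm_def by simp
    then have "(L2_norm (fN N))\<^sup>2 \<le> (C * L2_norm (gN N))\<^sup>2" using le by (intro power_mono) auto
    also have "\<dots> = C\<^sup>2 * (L2_norm (gN N))\<^sup>2" by (simp add: power_mult_distrib)
    also have "\<dots> \<le> C\<^sup>2 * (real (4 * N) * (real (dR + 1) * real dB * KB))"
      using gN_norm by (intro mult_left_mono) auto
    finally show ?thesis using fN_norm[of N] by linarith
  qed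
  define K where "K = 4 * C\<^sup>2 * real dB * KB"
  define N where "N = nat (ceiling (K / IA)) + 1"
  have Np: "real N > 0" unfolding N_def by simp
  have "real N > K / IA" unfolding N_def by linarith
  then have NK: "real N * IA > K" using IA_pos by (simp add: field_simps)
  have "real (dR + 1) * real N * (real N * IA) \<le> real (dR + 1) * real N * K"
    using key[of N] unfolding K_def by (simp add: power2_eq_square algebra_simps)
  then have "real N * IA \<le> K" using Np by (simp add: mult_le_cancel_left_pos)
  then show False using NK by simp
qed

end

theorem lemma4p2:
  fixes src tgt :: "'e \<Rightarrow> 'v" and VB VR :: "'v set" and dB dR :: nat and lam :: complex
  assumes "dB \<ge> 1" and "dR \<ge> 1"
    and "biregular_tree src tgt VB VR dB dR"
    and "cmod (mu_plus dB dR lam) = 1 / sqrt (real (dB * dR))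
         \<or> cmod (mu_minus dB dR lam) = 1 / sqrt (real (dB * dR))"
  shows "lam \<in> qg_spectrum src tgt VB VR \<and> Im lam = 0"
proof -
  obtain mu nu where mn: "mu = mu_plus dB dR lam \<and> nu = mu_minus dB dR lam \<or> mu = mu_minus dB dR lam \<and> nu = mu_plus dB dR lam"
    and nm: "cmod mu = 1 / sqrt (real (dB * dR))"
    using assms(4) by blast
  have im: "Im lam = 0" by (rule Im_lam_zero[OF assms(1,2) mn nm])
  have "mu = mu_plus dB dR lam \<or> mu = mu_minus dB dR lam" using mn by blast
  then have "mu\<^sup>2 - tr2 (T0 dB dR lam) * mu + det (T0 dB dR lam) = 0" by (rule mu_char)
  then obtain a1 a2 where a: "a1 \<noteq> 0 \<or> a2 \<noteq> 0"
    "T0 dB dR lam $ 1 $ 1 * a1 + T0 dB dR lam $ 1 $ 2 * a2 = mu * a1"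
    "T0 dB dR lam $ 2 $ 1 * a1 + T0 dB dR lam $ 2 $ 2 * a2 = mu * a2"
    using eigvec by blast
  have rt: "tgt undefined \<in> VR" using assms(3) unfolding biregular_tree_def by blast
  interpret W: wt src tgt VB VR dB dR "tgt undefined" lam mu a1 a2
    by unfold_locales (use assms(1,2,3) rt a nm in auto)
  have "lam \<notin> qg_resolvent_set src tgt VB VR" by (rule W.not_resolvent)
  then show ?thesis using im unfolding qg_spectrum_def by simp
qed

end
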